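(* Let $\mathcal G$ be a core network with multiple input nodes $\iota_1,\dots,\iota_n$ ($n\ge2$) and output node $o$, and let $\mathcal W_{\mathcal G}$ be its input counterweight subnetwork. Then $\langle H\rangle(\mathcal W_{\mathcal G})$ is, up to permutation of rows or columns, the irreducible input counterweight homeostasis block $C$ of $\langle H\rangle$.
   Context: Node $b$ is downstream from $a$ (and $a$ upstream from $b$) if there is a directed path from $a$ to $b$. Core network: every node upstream from $o$ and downstream from at least one input. Simple path: visits each node at most once; $\iota_mo$-simple path: simple path from $\iota_m$ to $o$. A node is $\iota_m$-simple if on some $\iota_mo$-simple path, $\iota_m$-appendage if downstream from $\iota_m$ but not $\iota_m$-simple; absolutely simple/appendage if $\iota_m$-simple/appendage for all $m$. Absolutely super-simple: lies on every $\iota_mo$-simple path for every $m$; ordered $\rho_1>\cdots>\rho_s>o$ ($b$ after $a$ on all such paths); $\rho_1$ is the greatest. A node is between adjacent absolutely super-simple nodes $\rho_k>\rho_{k+1}$ if it is absolutely simple and some $\iota_mo$-simple path visits $\rho_k$, it, $\rho_{k+1}$ in that order. For an $\iota_mo$-simple path $S$, $CS$ is the subnetwork of nodes of $\mathcal G$ not on $S$ with all arrows between them; $CS$-path equivalent = joined by directed paths inside $CS$ both ways. $\mathcal W_{\mathcal G}$ consists of: the input nodes; $\rho_1$; every node $\tau$ such that for some $m$ some $\iota_mo$-simple path visits $\iota_m,\tau,\rho_1$ in that order; all nodes neither absolutely appendage nor absolutely simple; all absolutely appendage nodes $CS_m$-path equivalent (for some $m$, some $\iota_mo$-simple $S_m$)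 to nodes that are not absolutely appendage and not between two absolutely super-simple nodes; with all arrows of $\mathcal G$ among them; its inputs are $\iota_1,\dots,\iota_n$ and output $\rho_1$. Admissible system: variables $x_j$ per node, $\dot x_{\iota_m}=f_{\iota_m}(X,\mathcal I)$, $\dot x_j=f_j(X)$ otherwise, $f_{j,x_\ell}\equiv0$ unless arrow $\ell\to j$ (all nodes self-coupled), $f_{\iota_m,\mathcal I}\neq0$; entries are independent indeterminates. For a network $\mathcal K$ with inputs $\iota_1,\dots,\iota_n$ and output $b$, $\langle H\rangle(\mathcal K)$ is $(f_{j,x_\ell})_{j,\ell\in\mathcal K}$ with the column of $b$ replaced by the column with $-f_{\iota_m,\mathcal I}$ in row $\iota_m$ and $0$ elsewhere; $\langle H\rangle=\langle H\rangle(\mathcal G)$. By Frobenius–König theory, for suitable permutation matrices $P,Q$, $P\langle H\rangle Q$ is block upper triangular with square fully indecomposable diagonal blocks (irreducible determinants); the unique diagonal block containing the entries $f_{\iota_m,\mathcal I}$, whose determinant is homogeneous of degree 1 in $f_{\iota_1,\mathcal I},\dots,f_{\iota_n,\mathcal I}$, is the input counterweight homeostasis block $C$. *)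

theory Defs
  imports Main
begin

text \<open>A network is given by a finite node set V, a set of arrows E (a pair (l,j) is an
arrow l -> j), a set of input nodes I (the nodes iota_1..iota_n) and an output node out.\<close>

definition downstream :: "('v \<times> 'v) set \<Rightarrow> 'v \<Rightarrow> 'v \<Rightarrow> bool" where
  "downstream E a b \<longleftrightarrow> (a, b) \<in> E\<^sup>*"

definition core_network :: "'v set \<Rightarrow> ('v \<times> 'v) set \<Rightarrow> 'v set \<Rightarrow> 'v \<Rightarrow> bool" where
  "core_network V E I out \<longleftrightarrow> finite V \<and> E \<subseteq> V \<times> V \<and> I \<subseteq> V \<and> out \<in> V \<and> out \<notin> I \<and>
     (\<forall>v\<in>V. downstream E v out \<and> (\<exists>i\<in>I. downstream E i v))"

definition simple_path :: "('v \<times> 'v) set \<Rightarrow> 'v \<Rightarrow> 'v \<Rightarrow> 'v list \<Rightarrow> bool" where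
  "simple_path E a b xs \<longleftrightarrow> xs \<noteq> [] \<and> hd xs = a \<and> last xs = b \<and> distinct xs \<and>
     successively (\<lambda>x y. (x, y) \<in> E) xs"

definition visits_before :: "'v list \<Rightarrow> 'v \<Rightarrow> 'v \<Rightarrow> bool" where
  "visits_before xs a b \<longleftrightarrow> (\<exists>p q. p < q \<and> q < length xs \<and> xs ! p = a \<and> xs ! q = b)"

definition i_simple :: "('v \<times> 'v) set \<Rightarrow> 'v \<Rightarrow> 'v \<Rightarrow> 'v \<Rightarrow> bool" where
  "i_simple E out i v \<longleftrightarrow> (\<exists>S. simple_path E i out S \<and> v \<in> set S)"

definition i_appendage :: "('v \<times> 'v) set \<Rightarrow> 'v \<Rightarrow> 'v \<Rightarrow> 'v \<Rightarrow> bool" where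
  "i_appendage E out i v \<longleftrightarrow> downstream E i v \<and> \<not> i_simple E out i v"

definition abs_simple :: "('v \<times> 'v) set \<Rightarrow> 'v set \<Rightarrow> 'v \<Rightarrow> 'v \<Rightarrow> bool" where
  "abs_simple E I out v \<longleftrightarrow> (\<forall>i\<in>I. i_simple E out i v)"

definition abs_appendage :: "('v \<times> 'v) set \<Rightarrow> 'v set \<Rightarrow> 'v \<Rightarrow> 'v \<Rightarrow> bool" where
  "abs_appendage E I out v \<longleftrightarrow> (\<forall>i\<in>I. i_appendage E out i v)"

definition abs_super_simple :: "'v set \<Rightarrow> ('v \<times> 'v) set \<Rightarrow> 'v set \<Rightarrow> 'v \<Rightarrow> 'v \<Rightarrow> bool" where
  "abs_super_simple V E I out v \<longleftrightarrow> v \<in> V \<and> (\<forall>i\<in>I. \<forall>S. simple_path E i out S \<longrightarrow> v \<in> set S)"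

definition ss_greater :: "('v \<times> 'v) set \<Rightarrow> 'v set \<Rightarrow> 'v \<Rightarrow> 'v \<Rightarrow> 'v \<Rightarrow> bool" where
  "ss_greater E I out a b \<longleftrightarrow> (\<forall>i\<in>I. \<forall>S. simple_path E i out S \<longrightarrow> visits_before S a b)"

definition rho1 :: "'v set \<Rightarrow> ('v \<times> 'v) set \<Rightarrow> 'v set \<Rightarrow> 'v \<Rightarrow> 'v" where
  "rho1 V E I out = (THE r. abs_super_simple V E I out r \<and>
      (\<forall>r'. abs_super_simple V E I out r' \<and> r' \<noteq> r \<longrightarrow> ss_greater E I out r r'))"

definition adjacent_ss :: "'v set \<Rightarrow> ('v \<times> 'v) set \<Rightarrow> 'v set \<Rightarrow> 'v \<Rightarrow> 'v \<Rightarrow> 'v \<Rightarrow> bool" where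
  "adjacent_ss V E I out a b \<longleftrightarrow> abs_super_simple V E I out a \<and> abs_super_simple V E I out b \<and>
     ss_greater E I out a b \<and>
     \<not> (\<exists>r. abs_super_simple V E I out r \<and> ss_greater E I out a r \<and> ss_greater E I out r b)"

definition between_ss :: "'v set \<Rightarrow> ('v \<times> 'v) set \<Rightarrow> 'v set \<Rightarrow> 'v \<Rightarrow> 'v \<Rightarrow> bool" where
  "between_ss V E I out v \<longleftrightarrow> (\<exists>a b. adjacent_ss V E I out a b \<and> abs_simple E I out v \<and>
     (\<exists>i\<in>I. \<exists>S. simple_path E i out S \<and> visits_before S a v \<and> visits_before S v b))"

definition cs_path_equiv :: "'v set \<Rightarrow> ('v \<times> 'v) set \<Rightarrow> 'v list \<Rightarrow> 'v \<Rightarrow> 'v \<Rightarrow> bool" where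
  "cs_path_equiv V E S u v \<longleftrightarrow>
     (let C = V - set S in u \<in> C \<and> v \<in> C \<and>
        (u, v) \<in> (E \<inter> (C \<times> C))\<^sup>* \<and> (v, u) \<in> (E \<inter> (C \<times> C))\<^sup>*)"

definition W_nodes :: "'v set \<Rightarrow> ('v \<times> 'v) set \<Rightarrow> 'v set \<Rightarrow> 'v \<Rightarrow> 'v set" where
  "W_nodes V E I out = {v \<in> V.
      v \<in> I
    \<or> v = rho1 V E I out
    \<or> (\<exists>i\<in>I. \<exists>S. simple_path E i out S \<and> visits_before S i v \<and> visits_before S v (rho1 V E I out))
    \<or> (\<not> abs_appendage E I out v \<and> \<not> abs_simple E I out v)
    \<or> (abs_appendage E I out v \<and>
         (\<exists>i\<in>I. \<exists>S. simple_path E i out S \<and>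
            (\<exists>u. \<not> abs_appendage E I out u \<and> \<not> between_ss V E I out u \<and> cs_path_equiv V E S v u)))}"

text \<open>Entries of the generalized homeostasis matrix are independent indeterminates;
  we represent them symbolically: Jac j l stands for f_{j,x_l}, Inp i for -f_{i,I};
  None stands for the entry 0.\<close>
datatype 'v entry = Jac 'v 'v | Inp 'v

type_synonym 'v gmat = "'v \<Rightarrow> 'v \<Rightarrow> 'v entry option"

text \<open><H>(K) for node set K, arrows E, inputs I and output b: rows and columns indexed by K
  (the column labelled b is the replaced input column). All nodes are self-coupled.\<close>
definition hmat :: "'v set \<Rightarrow> ('v \<times> 'v) set \<Rightarrow> 'v set \<Rightarrow> 'v \<Rightarrow> 'v gmat" where
  "hmat K E I b j l =
     (if j \<in> K \<and> l \<in> K then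
        (if l = b then (if j \<in> I then Some (Inp j) else None)
         else if l = j \<or> (l, j) \<in> E then Some (Jac j l) else None)
      else None)"

definition fully_indecomposable :: "'v gmat \<Rightarrow> 'v set \<Rightarrow> 'v set \<Rightarrow> bool" where
  "fully_indecomposable M R C \<longleftrightarrow> finite R \<and> finite C \<and> card R = card C \<and> card R \<ge> 1 \<and>
     (card R = 1 \<longrightarrow> (\<forall>r\<in>R. \<forall>c\<in>C. M r c \<noteq> None)) \<and>
     (\<forall>A B. A \<subseteq> R \<longrightarrow> B \<subseteq> C \<longrightarrow> A \<noteq> {} \<longrightarrow> B \<noteq> {} \<longrightarrow> card A + card B = card R \<longrightarrow>
        (\<exists>a\<in>A. \<exists>c\<in>B. M a c \<noteq> None))"

text \<open>A block upper triangular form P M Q with fully indecomposable square diagonal blocks: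
  the k-th diagonal block has rows fst (bs!k) and columns snd (bs!k).\<close>
definition btf_decomp :: "'v gmat \<Rightarrow> 'v set \<Rightarrow> 'v set \<Rightarrow> ('v set \<times> 'v set) list \<Rightarrow> bool" where
  "btf_decomp M Rows Cols bs \<longleftrightarrow>
     (\<forall>k < length bs. fully_indecomposable M (fst (bs ! k)) (snd (bs ! k))) \<and>
     (\<forall>k < length bs. \<forall>l < length bs. k \<noteq> l \<longrightarrow>
        fst (bs ! k) \<inter> fst (bs ! l) = {} \<and> snd (bs ! k) \<inter> snd (bs ! l) = {}) \<and>
     (\<Union>k < length bs. fst (bs ! k)) = Rows \<and>
     (\<Union>k < length bs. snd (bs ! k)) = Cols \<and>
     (\<forall>k < length bs. \<forall>l < k. \<forall>r \<in> fst (bs ! k). \<forall>c \<in> snd (bs ! l). M r c = None)"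

definition perm_equiv :: "'v gmat \<Rightarrow> 'v set \<Rightarrow> 'v set \<Rightarrow> 'v gmat \<Rightarrow> 'v set \<Rightarrow> 'v set \<Rightarrow> bool" where
  "perm_equiv M R C M' R' C' \<longleftrightarrow>
     (\<exists>\<sigma> \<tau>. bij_betw \<sigma> R R' \<and> bij_betw \<tau> C C' \<and> (\<forall>r\<in>R. \<forall>c\<in>C. M r c = M' (\<sigma> r) (\<tau> c)))"

end

theory Submission
  imports Defs
begin


lemma sp_snoc:
  assumes "simple_path R a y xs" "(y,z) \<in> R" "z \<notin> set xs"
  shows "simple_path R a z (xs @ [z])"
  using assms unfolding simple_path_def by (auto simp: successively_append_iff)

lemma succ_split:
  assumes "successively P (ys @ x # zs)"
  shows "successively P (ys @ [x])" "successively P (x # zs)"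
proof -
  have e: "ys @ x # zs = (ys @ [x]) @ zs" by simp
  show "successively P (ys @ [x])" using assms unfolding e successively_append_iff by blast
  show "successively P (x # zs)" using assms successively_append_iff[of P ys "x # zs"] by blast
qed

lemma prefix_path:
  assumes "simple_path R a b (ys @ x # zs)"
  shows "simple_path R a x (ys @ [x])"
proof -
  have h: "hd (ys @ [x]) = hd (ys @ x # zs)" by (cases ys) simp_all
  have d: "distinct (ys @ [x])" using assms unfolding simple_path_def by simp
  have s: "successively (\<lambda>x y. (x, y) \<in> R) (ys @ [x])"
    using assms succ_split(1)[of _ ys x zs] unfolding simple_path_def by blast
  show ?thesis using h d s assms unfolding simple_path_def by simp
qed

lemma suffix_path:
  assumes "simple_path R a b (ys @ x # zs)"
  shows "simple_path R x b (x # zs)"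
proof -
  have h: "last (x # zs) = last (ys @ x # zs)" by simp
  have d: "distinct (x # zs)" using assms unfolding simple_path_def by simp
  have s: "successively (\<lambda>x y. (x, y) \<in> R) (x # zs)"
    using assms succ_split(2)[of _ ys x zs] unfolding simple_path_def by blast
  show ?thesis using h d s assms unfolding simple_path_def by simp
qed

lemma walk_to_path:
  assumes "(a,b) \<in> (R \<inter> X \<times> X)\<^sup>*" "a \<in> X"
  shows "\<exists>xs. simple_path R a b xs \<and> set xs \<subseteq> X"
  using assms(1)
proof (induction rule: rtrancl_induct)
  case base
  then show ?case using assms(2) by (intro exI[of _ "[a]"]) (auto simp: simple_path_def)
next
  case (step y z)
  then obtain xs where xs: "simple_path R a y xs" "set xs \<subseteq> X" by blast
  show ?case
  proof (cases "z \<in> set xs")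
    case True
    then obtain ys zs where sp: "xs = ys @ z # zs" by (meson split_list)
    have "simple_path R a z (ys @ [z])"
      using prefix_path[OF xs(1)[unfolded sp]] .
    moreover have "set (ys @ [z]) \<subseteq> X" using xs(2) sp by simp
    ultimately show ?thesis by blast
  next
    case False
    have "simple_path R a z (xs @ [z])" using sp_snoc[OF xs(1)] step(2) False by blast
    moreover have "set (xs @ [z]) \<subseteq> X" using step(2) xs(2) by simp
    ultimately show ?thesis by blast
  qed
qed

lemma successively_rtrancl:
  assumes "successively (\<lambda>x y. (x,y) \<in> R) xs" "xs \<noteq> []"
  shows "(hd xs, last xs) \<in> (R \<inter> set xs \<times> set xs)\<^sup>*"
  using assms
proof (induction xs rule: induct_list012)
  case (3 x y zs)
  have h: "(y, last (y#zs)) \<in> (R \<inter> set (y#zs) \<times> set (y#zs))\<^sup>*"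
    using 3 by (auto)
  have "(y, last (y#zs)) \<in> (R \<inter> set (x#y#zs) \<times> set (x#y#zs))\<^sup>*"
    by (rule rtrancl_mono[THEN subsetD, OF _ h]) auto
  moreover have "(x,y) \<in> R \<inter> set (x#y#zs) \<times> set (x#y#zs)" using 3 by auto
  ultimately have "(x, last (y#zs)) \<in> (R \<inter> set (x#y#zs) \<times> set (x#y#zs))\<^sup>*"
    by (meson converse_rtrancl_into_rtrancl)
  then show ?case by simp
qed auto

lemma path_rtrancl:
  assumes "simple_path R a b xs"
  shows "(a, b) \<in> (R \<inter> set xs \<times> set xs)\<^sup>*"
  using successively_rtrancl[of R xs] assms unfolding simple_path_def by auto

lemma path_split:
  assumes "simple_path R a b xs" "x \<in> set xs"
  obtains ys zs where "xs = ys @ x # zs" "simple_path R a x (ys @ [x])" "simple_path R x b (x # zs)"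
    "x \<notin> set ys" "x \<notin> set zs" "set ys \<inter> set zs = {}"
proof -
  obtain ys zs where sp: "xs = ys @ x # zs" using assms(2) by (meson split_list)
  have "simple_path R a x (ys @ [x])" "simple_path R x b (x # zs)"
    using prefix_path[OF assms(1)[unfolded sp]] suffix_path[OF assms(1)[unfolded sp]] by auto
  then show ?thesis using that sp assms(1) unfolding simple_path_def by auto
qed

lemma path_from_mem:
  assumes "simple_path R a b xs" "x \<in> set xs"
  shows "(x, b) \<in> (R \<inter> set xs \<times> set xs)\<^sup>*" "(a, x) \<in> (R \<inter> set xs \<times> set xs)\<^sup>*"
proof -
  obtain ys zs where sp: "xs = ys @ x # zs" "simple_path R a x (ys @ [x])" "simple_path R x b (x # zs)"
    using path_split[OF assms] by blast
  show "(x, b) \<in> (R \<inter> set xs \<times> set xs)\<^sup>*"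
    by (rule rtrancl_mono[THEN subsetD, OF _ path_rtrancl[OF sp(3)]]) (auto simp: sp(1))
  show "(a, x) \<in> (R \<inter> set xs \<times> set xs)\<^sup>*"
    by (rule rtrancl_mono[THEN subsetD, OF _ path_rtrancl[OF sp(2)]]) (auto simp: sp(1))
qed

lemma path_concat:
  assumes "simple_path R a b xs" "simple_path R b c ys" "set xs \<inter> set ys \<subseteq> {b}"
  shows "simple_path R a c (xs @ tl ys)"
proof -
  obtain y ys' where ys: "ys = b # ys'" using assms(2) unfolding simple_path_def by (cases ys) auto
  have lx: "last xs = b" "xs \<noteq> []" using assms(1) unfolding simple_path_def by auto
  have "b \<notin> set ys'" using assms(2) ys unfolding simple_path_def by auto
  have "successively (\<lambda>x y. (x,y) \<in> R) (xs @ ys')"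
    using assms(1,2) lx unfolding simple_path_def ys
    by (cases ys') (auto simp: successively_append_iff)
  moreover have "distinct (xs @ ys')"
    using assms lx \<open>b \<notin> set ys'\<close> unfolding simple_path_def ys by auto
  moreover have "last (xs @ ys') = c"
    using assms(2) lx unfolding simple_path_def ys by (cases ys') auto
  ultimately show ?thesis using assms(1) lx unfolding simple_path_def ys by auto
qed

lemma visits_before_iff:
  assumes "distinct xs"
  shows "visits_before xs a b \<longleftrightarrow> (\<exists>ys zs. xs = ys @ a # zs \<and> b \<in> set zs)"
proof
  assume "visits_before xs a b"
  then obtain p q where pq: "p < q" "q < length xs" "xs ! p = a" "xs ! q = b"
    unfolding visits_before_def by blast
  have "xs = take p xs @ a # drop (Suc p) xs" using pq id_take_nth_drop[of p xs] by simp
  moreover have "b \<in> set (drop (Suc p) xs)"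
  proof -
    have "q - Suc p < length (drop (Suc p) xs)" using pq by auto
    moreover have "drop (Suc p) xs ! (q - Suc p) = b" using pq by auto
    ultimately show ?thesis by (metis nth_mem)
  qed
  ultimately show "\<exists>ys zs. xs = ys @ a # zs \<and> b \<in> set zs" by blast
next
  assume "\<exists>ys zs. xs = ys @ a # zs \<and> b \<in> set zs"
  then obtain ys zs where sp: "xs = ys @ a # zs" "b \<in> set zs" by blast
  then obtain k where k: "k < length zs" "zs ! k = b" by (meson in_set_conv_nth)
  have e1: "(ys @ (a#zs)) ! (length ys + Suc k) = (a#zs) ! Suc k" by (rule nth_append_length_plus)
  have e2: "(ys @ (a#zs)) ! (length ys) = a" by (rule nth_append_length)
  have l: "length xs = length ys + Suc (length zs)" using sp(1) by simp
  have c1: "length ys + Suc k < length xs" using l k(1) by linarith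
  have c2: "xs ! length ys = a" using e2 sp(1) by simp
  have c3: "xs ! (length ys + Suc k) = b" using e1 sp(1) k(2) by simp
  have "length ys < length ys + Suc k \<and> length ys + Suc k < length xs \<and> xs ! length ys = a \<and> xs ! (length ys + Suc k) = b"
    using c1 c2 c3 by simp
  then show "visits_before xs a b" unfolding visits_before_def by blast
qed


definition Dg :: "'v gmat \<Rightarrow> ('v \<Rightarrow> 'v) \<Rightarrow> 'v set \<Rightarrow> ('v \<times> 'v) set" where
  "Dg M mu R = {(r, r'). r \<in> R \<and> r' \<in> R \<and> M r (mu r') \<noteq> None}"

lemma fi_strongly_connected:
  assumes fi: "fully_indecomposable M R C" and bij: "bij_betw mu R C"
    and diag: "\<forall>r\<in>R. M r (mu r) \<noteq> None" and r: "r \<in> R" and r': "r' \<in> R"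
  shows "(r, r') \<in> (Dg M mu R)\<^sup>*"
proof (rule ccontr)
  assume nr: "(r, r') \<notin> (Dg M mu R)\<^sup>*"
  define A where "A = {x \<in> R. (r, x) \<in> (Dg M mu R)\<^sup>*}"
  define B where "B = C - mu ` A"
  have finR: "finite R" and finC: "finite C" and cardRC: "card R = card C"
    using fi unfolding fully_indecomposable_def by auto
  have inj: "inj_on mu R" using bij by (rule bij_betw_imp_inj_on)
  have imgR: "mu ` R = C" using bij by (rule bij_betw_imp_surj_on)
  have AR: "A \<subseteq> R" unfolding A_def by auto
  have BC: "B \<subseteq> C" unfolding B_def by auto
  have rA: "r \<in> A" using r unfolding A_def by auto
  have r'A: "r' \<notin> A" using nr unfolding A_def by auto
  have "mu r' \<in> B" unfolding B_def using r' r'A imgR inj AR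
    by (auto simp: inj_on_image_mem_iff)
  hence Bne: "B \<noteq> {}" by auto
  have finA: "finite A" using AR finR finite_subset by blast
  have cA: "card (mu ` A) = card A" using card_image inj_on_subset[OF inj AR] by blast
  have sub: "mu ` A \<subseteq> C" using AR imgR by auto
  have cB: "card B = card C - card A"
    unfolding B_def using card_Diff_subset[OF finite_imageI[OF finA] sub] cA by simp
  have "card A \<le> card C" using cA card_mono[OF finC sub] by simp
  hence sum: "card A + card B = card R" using cB cardRC by simp
  obtain a c where ac: "a \<in> A" "c \<in> B" "M a c \<noteq> None"
    using fi AR BC rA Bne sum unfolding fully_indecomposable_def by blast
  obtain x where x: "x \<in> R" "c = mu x" using ac(2) BC imgR by blast
  have xA: "x \<notin> A" using ac(2) x unfolding B_def by auto
  have "(r, a) \<in> (Dg M mu R)\<^sup>*" using ac(1) unfolding A_def by auto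
  moreover have "(a, x) \<in> Dg M mu R" using ac x AR unfolding Dg_def by auto
  ultimately have "(r, x) \<in> (Dg M mu R)\<^sup>*" by (rule rtrancl_into_rtrancl)
  thus False using xA x(1) unfolding A_def by auto
qed

lemma sc_fi:
  assumes finR: "finite R" and ne: "R \<noteq> {}" and bij: "bij_betw mu R C"
    and diag: "\<forall>r\<in>R. M r (mu r) \<noteq> None"
    and sc: "\<forall>r\<in>R. \<forall>r'\<in>R. (r, r') \<in> (Dg M mu R)\<^sup>*"
  shows "fully_indecomposable M R C"
proof -
  have inj: "inj_on mu R" using bij by (rule bij_betw_imp_inj_on)
  have imgR: "mu ` R = C" using bij by (rule bij_betw_imp_surj_on)
  have finC: "finite C" using imgR finR by blast
  have cardRC: "card R = card C" using bij_betw_same_card[OF bij] .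
  have c1: "card R \<ge> 1" using finR ne by (simp add: Suc_leI card_gt_0_iff)
  have one: "card R = 1 \<longrightarrow> (\<forall>r\<in>R. \<forall>c\<in>C. M r c \<noteq> None)"
  proof
    assume "card R = 1"
    then obtain r0 where "R = {r0}" by (meson card_1_singletonE)
    then show "\<forall>r\<in>R. \<forall>c\<in>C. M r c \<noteq> None" using imgR diag by auto
  qed
  have main: "\<exists>a\<in>A. \<exists>c\<in>B. M a c \<noteq> None"
    if AR: "A \<subseteq> R" and BC: "B \<subseteq> C" and Ane: "A \<noteq> {}" and Bne: "B \<noteq> {}"
      and sum: "card A + card B = card R" for A B
  proof (rule ccontr)
    assume "\<not> (\<exists>a\<in>A. \<exists>c\<in>B. M a c \<noteq> None)"
    hence z: "\<And>a c. a \<in> A \<Longrightarrow> c \<in> B \<Longrightarrow> M a c = None" by blast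
    have finA: "finite A" using AR finR finite_subset by blast
    have finB: "finite B" using BC finC finite_subset by blast
    have s1: "mu ` A \<subseteq> C - B"
    proof
      fix y assume "y \<in> mu ` A"
      then obtain a where a: "a \<in> A" "y = mu a" by blast
      have "M a (mu a) \<noteq> None" using diag a AR by auto
      then show "y \<in> C - B" using z[OF a(1)] a AR imgR by auto
    qed
    have cA: "card (mu ` A) = card A" using card_image inj_on_subset[OF inj AR] by blast
    have "card (C - B) = card C - card B" using card_Diff_subset[OF finB BC] .
    hence "card (mu ` A) = card (C - B)" using cA sum cardRC by simp
    hence eqA: "mu ` A = C - B" using card_subset_eq[OF _ s1] finC by blast
    obtain a where a: "a \<in> A" using Ane by blast
    have "card B > 0" using finB Bne by (simp add: card_gt_0_iff)
    hence "card A < card R" using sum by linarith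
    hence "A \<noteq> R" by auto
    then obtain r' where r': "r' \<in> R" "r' \<notin> A" using AR by blast
    have clos: "x \<in> A" if "(a, x) \<in> (Dg M mu R)\<^sup>*" for x
      using that
    proof (induction rule: rtrancl_induct)
      case base then show ?case using a .
    next
      case (step y w)
      have yw: "y \<in> R" "w \<in> R" "M y (mu w) \<noteq> None" using step(2) unfolding Dg_def by auto
      have "mu w \<in> C" using yw imgR by auto
      moreover have "mu w \<notin> B" using z[OF step(3)] yw by auto
      ultimately have "mu w \<in> mu ` A" using eqA by auto
      then show ?case using inj AR yw by (auto simp: inj_on_image_mem_iff)
    qed
    have "r' \<in> A" using clos sc a AR r' by auto
    then show False using r' by simp
  qed
  show ?thesis unfolding fully_indecomposable_def
    using finR finC cardRC c1 one main by blast
qed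

lemma btf_idx_unique:
  assumes "btf_decomp M Rows Cols bs" "a < length bs" "b < length bs"
    "x \<in> fst (bs ! a)" "x \<in> fst (bs ! b)"
  shows "a = b"
  using assms unfolding btf_decomp_def by blast

lemma btf_idx_unique_col:
  assumes "btf_decomp M Rows Cols bs" "a < length bs" "b < length bs"
    "x \<in> snd (bs ! a)" "x \<in> snd (bs ! b)"
  shows "a = b"
  using assms unfolding btf_decomp_def by blast

lemma btf_matching:
  assumes btf: "btf_decomp M Rows Cols bs" and bij: "bij_betw mu Rows Cols"
    and diag: "\<forall>r\<in>Rows. M r (mu r) \<noteq> None" and finR: "finite Rows" and k: "k < length bs"
  shows "mu ` fst (bs ! k) = snd (bs ! k)"
proof -
  define RR where "RR j = (\<Union>l\<in>{j..<length bs}. fst (bs ! l))" for j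
  define CC where "CC j = (\<Union>l\<in>{j..<length bs}. snd (bs ! l))" for j
  have inj: "inj_on mu Rows" using bij by (rule bij_betw_imp_inj_on)
  have imgR: "mu ` Rows = Cols" using bij by (rule bij_betw_imp_surj_on)
  have finC: "finite Cols" using imgR finR by blast
  have fi: "\<And>l. l < length bs \<Longrightarrow> fully_indecomposable M (fst (bs ! l)) (snd (bs ! l))"
    using btf unfolding btf_decomp_def by blast
  have rowsU: "(\<Union>l<length bs. fst (bs ! l)) = Rows" using btf unfolding btf_decomp_def by blast
  have colsU: "(\<Union>l<length bs. snd (bs ! l)) = Cols" using btf unfolding btf_decomp_def by blast
  have tri: "\<And>l l' r c. l < length bs \<Longrightarrow> l' < l \<Longrightarrow> r \<in> fst (bs ! l) \<Longrightarrow> c \<in> snd (bs ! l') \<Longrightarrow> M r c = None"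
    using btf unfolding btf_decomp_def by blast
  have disjR: "\<And>l l'. l < length bs \<Longrightarrow> l' < length bs \<Longrightarrow> l \<noteq> l' \<Longrightarrow> fst (bs ! l) \<inter> fst (bs ! l') = {}"
    using btf unfolding btf_decomp_def by blast
  have disjC: "\<And>l l'. l < length bs \<Longrightarrow> l' < length bs \<Longrightarrow> l \<noteq> l' \<Longrightarrow> snd (bs ! l) \<inter> snd (bs ! l') = {}"
    using btf unfolding btf_decomp_def by blast
  have sub: "mu ` RR j \<subseteq> CC j" for j
  proof
    fix y assume "y \<in> mu ` RR j"
    then obtain r l where rl: "y = mu r" "r \<in> fst (bs ! l)" "j \<le> l" "l < length bs"
      unfolding RR_def by auto
    have "r \<in> Rows" using rl rowsU by blast
    hence "y \<in> Cols" using rl imgR by auto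
    then obtain l' where l': "l' < length bs" "y \<in> snd (bs ! l')" using colsU by blast
    have "M r y \<noteq> None" using diag \<open>r \<in> Rows\<close> rl by auto
    hence "\<not> l' < l" using tri[OF rl(4) _ rl(2) l'(2)] by auto
    then show "y \<in> CC j" unfolding CC_def using l' rl by auto
  qed
  have finRl: "\<And>l. l < length bs \<Longrightarrow> finite (fst (bs ! l))" using fi unfolding fully_indecomposable_def by blast
  have finCl: "\<And>l. l < length bs \<Longrightarrow> finite (snd (bs ! l))" using fi unfolding fully_indecomposable_def by blast
  have cardl: "\<And>l. l < length bs \<Longrightarrow> card (fst (bs ! l)) = card (snd (bs ! l))" using fi unfolding fully_indecomposable_def by blast
  have dR: "\<forall>l\<in>{j..<length bs}. \<forall>l'\<in>{j..<length bs}. l \<noteq> l' \<longrightarrow> fst (bs ! l) \<inter> fst (bs ! l') = {}" for j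
    using disjR by auto
  have dC: "\<forall>l\<in>{j..<length bs}. \<forall>l'\<in>{j..<length bs}. l \<noteq> l' \<longrightarrow> snd (bs ! l) \<inter> snd (bs ! l') = {}" for j
    using disjC by auto
  have fR: "\<forall>l\<in>{j..<length bs}. finite (fst (bs ! l))" for j using finRl by auto
  have fC: "\<forall>l\<in>{j..<length bs}. finite (snd (bs ! l))" for j using finCl by auto
  have cRR: "card (RR j) = (\<Sum>l\<in>{j..<length bs}. card (fst (bs ! l)))" for j
    unfolding RR_def using card_UN_disjoint[OF _ fR dR] by simp
  have cCC: "card (CC j) = (\<Sum>l\<in>{j..<length bs}. card (snd (bs ! l)))" for j
    unfolding CC_def using card_UN_disjoint[OF _ fC dC] by simp
  have cEq: "card (RR j) = card (CC j)" for j
    unfolding cRR cCC by (rule sum.cong) (auto intro: cardl)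
  have RRsub: "RR j \<subseteq> Rows" for j unfolding RR_def using rowsU by auto
  have finCC: "finite (CC j)" for j unfolding CC_def using finCl by auto
  have eq: "mu ` RR j = CC j" for j
  proof -
    have "card (mu ` RR j) = card (RR j)" using card_image inj_on_subset[OF inj RRsub] by blast
    then show ?thesis using card_subset_eq[OF finCC sub] cEq by simp
  qed
  have ins: "{k..<length bs} = insert k {Suc k..<length bs}" using k by auto
  have split: "RR k = fst (bs ! k) \<union> RR (Suc k)" unfolding RR_def ins by simp
  have split2: "CC k = snd (bs ! k) \<union> CC (Suc k)" unfolding CC_def ins by simp
  have d1: "fst (bs ! k) \<inter> RR (Suc k) = {}"
  proof -
    { fix x l assume "x \<in> fst (bs ! k)" "l \<in> {Suc k..<length bs}" "x \<in> fst (bs ! l)"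
      then have False using disjR[of k l] k by auto }
    then show ?thesis unfolding RR_def by blast
  qed
  have d2: "snd (bs ! k) \<inter> CC (Suc k) = {}"
  proof -
    { fix x l assume "x \<in> snd (bs ! k)" "l \<in> {Suc k..<length bs}" "x \<in> snd (bs ! l)"
      then have False using disjC[of k l] k by auto }
    then show ?thesis unfolding CC_def by blast
  qed
  have "mu ` fst (bs ! k) = mu ` RR k - mu ` RR (Suc k)"
  proof -
    have "mu ` (RR k - RR (Suc k)) = mu ` RR k - mu ` RR (Suc k)"
    proof -
      have "RR k - RR (Suc k) \<subseteq> Rows" using RRsub[of k] by blast
      then show ?thesis using inj_on_image_set_diff[OF inj _ RRsub] by blast
    qed
    moreover have "RR k - RR (Suc k) = fst (bs ! k)" using split d1 by blast
    ultimately show ?thesis by simp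
  qed
  also have "\<dots> = CC k - CC (Suc k)" using eq by simp
  also have "\<dots> = snd (bs ! k)" using split2 d2 by blast
  finally show ?thesis .
qed

lemma btf_reach_mono:
  assumes btf: "btf_decomp M Rows Cols bs" and bij: "bij_betw mu Rows Cols"
    and diag: "\<forall>r\<in>Rows. M r (mu r) \<noteq> None" and finR: "finite Rows"
    and path: "(r, r') \<in> (Dg M mu Rows)\<^sup>*"
    and a: "a < length bs" "r \<in> fst (bs ! a)" and b: "b < length bs" "r' \<in> fst (bs ! b)"
  shows "a \<le> b"
proof -
  have rowsU: "(\<Union>l<length bs. fst (bs ! l)) = Rows" using btf unfolding btf_decomp_def by blast
  have tri: "\<And>l l' r c. l < length bs \<Longrightarrow> l' < l \<Longrightarrow> r \<in> fst (bs ! l) \<Longrightarrow> c \<in> snd (bs ! l') \<Longrightarrow> M r c = None"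
    using btf unfolding btf_decomp_def by blast
  have mm: "\<And>l. l < length bs \<Longrightarrow> mu ` fst (bs ! l) = snd (bs ! l)"
    using btf_matching[OF btf bij diag finR] by blast
  have "\<exists>c<length bs. a \<le> c \<and> x \<in> fst (bs ! c)" if "(r, x) \<in> (Dg M mu Rows)\<^sup>*" for x
    using that
  proof (induction rule: rtrancl_induct)
    case base then show ?case using a by auto
  next
    case (step y w)
    obtain c where c: "c < length bs" "a \<le> c" "y \<in> fst (bs ! c)" using step(3) by blast
    have yw: "w \<in> Rows" "M y (mu w) \<noteq> None" using step(2) unfolding Dg_def by auto
    obtain d where d: "d < length bs" "w \<in> fst (bs ! d)" using yw rowsU by blast
    have mw: "mu w \<in> snd (bs ! d)" using mm[OF d(1)] d(2) by blast
    have "\<not> d < c"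
    proof
      assume "d < c"
      then have "M y (mu w) = None" using tri[OF c(1) _ c(3) mw] by blast
      then show False using yw by simp
    qed
    then show ?case using d c by auto
  qed
  then obtain c where c: "c < length bs" "a \<le> c" "r' \<in> fst (bs ! c)" using path by blast
  have "c = b" using btf_idx_unique[OF btf c(1) b(1) c(3) b(2)] .
  then show ?thesis using c by simp
qed


lemma rtrancl_inside_scc:
  assumes "(a, b) \<in> D\<^sup>*" "(b, a) \<in> D\<^sup>*"
  shows "(a, b) \<in> (D \<inter> {x. (a,x) \<in> D\<^sup>* \<and> (x,a) \<in> D\<^sup>*} \<times> {x. (a,x) \<in> D\<^sup>* \<and> (x,a) \<in> D\<^sup>*})\<^sup>*"
  using assms
proof (induction rule: rtrancl_induct)
  case base then show ?case by simp
next
  case (step y z)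
  have "(y, a) \<in> D\<^sup>*" using step(2,4) by (meson converse_rtrancl_into_rtrancl)
  then have IH: "(a, y) \<in> (D \<inter> {x. (a,x) \<in> D\<^sup>* \<and> (x,a) \<in> D\<^sup>*} \<times> {x. (a,x) \<in> D\<^sup>* \<and> (x,a) \<in> D\<^sup>*})\<^sup>*"
    using step(3) by blast
  have "(y, z) \<in> D \<inter> {x. (a,x) \<in> D\<^sup>* \<and> (x,a) \<in> D\<^sup>*} \<times> {x. (a,x) \<in> D\<^sup>* \<and> (x,a) \<in> D\<^sup>*}"
    using step(1,2,4) \<open>(y, a) \<in> D\<^sup>*\<close> by (auto intro: rtrancl_into_rtrancl)
  then show ?case by (rule rtrancl_into_rtrancl[OF IH])
qed

lemma btf_exists:
  assumes finR: "finite Rows" and bij: "bij_betw mu Rows Cols"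
    and diag: "\<forall>r\<in>Rows. M r (mu r) \<noteq> None"
  shows "\<exists>bs. btf_decomp M Rows Cols bs"
proof -
  define D where "D = Dg M mu Rows"
  have DR: "D \<subseteq> Rows \<times> Rows" unfolding D_def Dg_def by auto
  define scc where "scc r = {x \<in> Rows. (r,x) \<in> D\<^sup>* \<and> (x,r) \<in> D\<^sup>*}" for r
  define Cls where "Cls = scc ` Rows"
  define anc where "anc X = {x \<in> Rows. \<exists>y\<in>X. (x,y) \<in> D\<^sup>*}" for X
  define key where "key X = card (anc X)" for X
  have inj: "inj_on mu Rows" using bij by (rule bij_betw_imp_inj_on)
  have imgR: "mu ` Rows = Cols" using bij by (rule bij_betw_imp_surj_on)
  have finCls: "finite Cls" unfolding Cls_def using finR by simp
  obtain xs where xs: "set xs = Cls" "distinct xs" using finite_distinct_list[OF finCls] by blast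
  define ys where "ys = sort_key key xs"
  have ys: "set ys = Cls" "distinct ys" "sorted (map key ys)"
    unfolding ys_def using xs by (auto simp: distinct_sort)
  define bs where "bs = map (\<lambda>X. (X, mu ` X)) ys"
  have lbs: "length bs = length ys" unfolding bs_def by simp
  have bsk: "\<And>k. k < length ys \<Longrightarrow> bs ! k = (ys ! k, mu ` (ys ! k))" unfolding bs_def by simp
  have ysCls: "\<And>k. k < length ys \<Longrightarrow> ys ! k \<in> Cls" using ys(1) by auto
  have scc_self: "\<And>r. r \<in> Rows \<Longrightarrow> r \<in> scc r" unfolding scc_def by auto
  have scc_sub: "\<And>r. scc r \<subseteq> Rows" unfolding scc_def by auto
  have scc_eq: "\<And>r z. z \<in> scc r \<Longrightarrow> scc z = scc r"
    unfolding scc_def by (auto intro: rtrancl_trans)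
  have cls_disj: "\<And>X Y. X \<in> Cls \<Longrightarrow> Y \<in> Cls \<Longrightarrow> X \<noteq> Y \<Longrightarrow> X \<inter> Y = {}"
  proof -
    fix X Y assume XY: "X \<in> Cls" "Y \<in> Cls" "X \<noteq> Y"
    obtain a b where ab: "X = scc a" "Y = scc b" using XY unfolding Cls_def by blast
    show "X \<inter> Y = {}"
    proof (rule ccontr)
      assume "X \<inter> Y \<noteq> {}"
      then obtain z where "z \<in> scc a" "z \<in> scc b" using ab by blast
      then have "scc a = scc b" using scc_eq by metis
      then show False using ab XY by simp
    qed
  qed
  have sc_cls: "\<And>X a b. X \<in> Cls \<Longrightarrow> a \<in> X \<Longrightarrow> b \<in> X \<Longrightarrow> (a, b) \<in> (Dg M mu X)\<^sup>*"
  proof -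
    fix X a b assume H: "X \<in> Cls" "a \<in> X" "b \<in> X"
    obtain r where r: "X = scc r" using H unfolding Cls_def by blast
    have Xa: "X = scc a" using scc_eq H(2) r by metis
    have ab: "(a, b) \<in> D\<^sup>*" "(b, a) \<in> D\<^sup>*" using H(3) Xa unfolding scc_def by auto
    have aR: "a \<in> Rows" using H(2) Xa scc_sub by blast
    have "{x. (a,x) \<in> D\<^sup>* \<and> (x,a) \<in> D\<^sup>*} = X"
    proof
      show "{x. (a,x) \<in> D\<^sup>* \<and> (x,a) \<in> D\<^sup>*} \<subseteq> X"
      proof
        fix x assume x: "x \<in> {x. (a,x) \<in> D\<^sup>* \<and> (x,a) \<in> D\<^sup>*}"
        have "x \<in> Rows"
        proof (cases "x = a")
          case True then show ?thesis using aR by simp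
        next
          case False
          then have "(a, x) \<in> D\<^sup>+" using x by (auto simp: rtrancl_eq_or_trancl)
          then obtain w where "(w, x) \<in> D" by (meson tranclE)
          then show ?thesis using DR by auto
        qed
        then show "x \<in> X" using x Xa unfolding scc_def by auto
      qed
      show "X \<subseteq> {x. (a,x) \<in> D\<^sup>* \<and> (x,a) \<in> D\<^sup>*}" using Xa unfolding scc_def by auto
    qed
    moreover have "D \<inter> X \<times> X = Dg M mu X" unfolding D_def Dg_def using Xa scc_sub by auto
    ultimately show "(a, b) \<in> (Dg M mu X)\<^sup>*" using rtrancl_inside_scc[OF ab] by simp
  qed
  have fi_cls: "\<And>X. X \<in> Cls \<Longrightarrow> fully_indecomposable M X (mu ` X)"
  proof -
    fix X assume X: "X \<in> Cls"
    obtain r where r: "r \<in> Rows" "X = scc r" using X unfolding Cls_def by blast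
    have XR: "X \<subseteq> Rows" using r scc_sub by blast
    show "fully_indecomposable M X (mu ` X)"
    proof (rule sc_fi)
      show "finite X" using XR finR finite_subset by blast
      show "X \<noteq> {}" using r scc_self by blast
      show "bij_betw mu X (mu ` X)" using inj_on_subset[OF inj XR] by (simp add: bij_betw_def)
      show "\<forall>r\<in>X. M r (mu r) \<noteq> None" using diag XR by blast
      show "\<forall>r\<in>X. \<forall>r'\<in>X. (r, r') \<in> (Dg M mu X)\<^sup>*" using sc_cls X by blast
    qed
  qed
  have c1: "\<forall>k < length bs. fully_indecomposable M (fst (bs ! k)) (snd (bs ! k))"
    using fi_cls bsk ysCls lbs by simp
  have c2: "\<forall>k < length bs. \<forall>l < length bs. k \<noteq> l \<longrightarrow>
        fst (bs ! k) \<inter> fst (bs ! l) = {} \<and> snd (bs ! k) \<inter> snd (bs ! l) = {}"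
  proof (intro allI impI)
    fix k l assume kl: "k < length bs" "l < length bs" "k \<noteq> l"
    have ne: "ys ! k \<noteq> ys ! l" using ys(2) kl lbs by (simp add: nth_eq_iff_index_eq)
    have d: "ys ! k \<inter> ys ! l = {}" using cls_disj[OF ysCls ysCls ne] kl lbs by simp
    have sub: "ys ! k \<subseteq> Rows" "ys ! l \<subseteq> Rows" using ysCls kl lbs scc_sub unfolding Cls_def by auto
    have "mu ` (ys ! k) \<inter> mu ` (ys ! l) = {}"
      using inj_on_image_Int[OF inj sub(1) sub(2)] d by simp
    then show "fst (bs ! k) \<inter> fst (bs ! l) = {} \<and> snd (bs ! k) \<inter> snd (bs ! l) = {}"
      using d bsk kl lbs by simp
  qed
  have U: "(\<Union>k < length bs. fst (bs ! k)) = \<Union> Cls"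
  proof -
    have "(\<Union>k < length bs. fst (bs ! k)) = (\<Union>k < length ys. ys ! k)" using bsk lbs by simp
    also have "\<dots> = \<Union> (set ys)" by (auto simp: in_set_conv_nth) (metis nth_mem)
    finally show ?thesis using ys(1) by simp
  qed
  have UCls: "\<Union> Cls = Rows" unfolding Cls_def using scc_self scc_sub by blast
  have c3: "(\<Union>k < length bs. fst (bs ! k)) = Rows" using U UCls by simp
  have c4: "(\<Union>k < length bs. snd (bs ! k)) = Cols"
  proof -
    have "(\<Union>k < length bs. snd (bs ! k)) = (\<Union>k < length bs. mu ` fst (bs ! k))" using bsk lbs by simp
    also have "\<dots> = mu ` (\<Union>k < length bs. fst (bs ! k))" by blast
    finally show ?thesis using c3 imgR by simp
  qed
  have c5: "\<forall>k < length bs. \<forall>l < k. \<forall>r \<in> fst (bs ! k). \<forall>c \<in> snd (bs ! l). M r c = None"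
  proof (intro allI impI ballI)
    fix k l r c assume k: "k < length bs" and lk: "l < k" and r: "r \<in> fst (bs ! k)" and c: "c \<in> snd (bs ! l)"
    have l: "l < length ys" using k lk lbs by simp
    have k': "k < length ys" using k lbs by simp
    define X where "X = ys ! k"
    define Y where "Y = ys ! l"
    have XC: "X \<in> Cls" "Y \<in> Cls" unfolding X_def Y_def using ysCls l k' by auto
    have rX: "r \<in> X" using r bsk k' unfolding X_def by simp
    obtain r' where r': "r' \<in> Y" "c = mu r'" using c bsk l unfolding Y_def by auto
    have ne: "X \<noteq> Y" unfolding X_def Y_def using ys(2) l k' lk by (simp add: nth_eq_iff_index_eq)
    have XR: "X \<subseteq> Rows" "Y \<subseteq> Rows" using XC scc_sub unfolding Cls_def by auto
    show "M r c = None"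
    proof (rule ccontr)
      assume nz: "M r c \<noteq> None"
      have e: "(r, r') \<in> D" unfolding D_def Dg_def using nz r' rX XR by auto
      obtain a where a: "X = scc a" using XC unfolding Cls_def by blast
      have Xr: "X = scc r" using scc_eq rX a by metis
      obtain b where b: "Y = scc b" using XC unfolding Cls_def by blast
      have Yr': "Y = scc r'" using scc_eq r'(1) b by metis
      have subs: "anc X \<subseteq> anc Y"
      proof
        fix x assume "x \<in> anc X"
        then obtain y where y: "x \<in> Rows" "y \<in> X" "(x, y) \<in> D\<^sup>*" unfolding anc_def by blast
        have "(y, r) \<in> D\<^sup>*" using y(2) Xr unfolding scc_def by auto
        then have "(x, r') \<in> D\<^sup>*" using y(3) e by (meson rtrancl_trans rtrancl_into_rtrancl)
        then show "x \<in> anc Y" unfolding anc_def using y(1) r'(1) by blast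
      qed
      have inY: "r' \<in> anc Y" unfolding anc_def using r'(1) XR by auto
      have notX: "r' \<notin> anc X"
      proof
        assume "r' \<in> anc X"
        then obtain y where y: "y \<in> X" "(r', y) \<in> D\<^sup>*" unfolding anc_def by blast
        have "(y, r) \<in> D\<^sup>*" using y(1) Xr unfolding scc_def by auto
        then have "(r', r) \<in> D\<^sup>*" using y(2) by (rule rtrancl_trans[rotated])
        moreover have "(r, r') \<in> D\<^sup>*" using e by simp
        ultimately have "r' \<in> X" unfolding Xr scc_def using XR r'(1) by auto
        then show False using r'(1) cls_disj[OF XC ne] by blast
      qed
      have "anc X \<subset> anc Y" using subs inY notX by blast
      moreover have "finite (anc Y)" unfolding anc_def using finR by simp
      ultimately have "key X < key Y" unfolding key_def by (rule psubset_card_mono[rotated])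
      moreover have "key Y \<le> key X"
        using sorted_nth_mono[OF ys(3), of l k] lk k' unfolding X_def Y_def by simp
      ultimately show False by simp
    qed
  qed
  show ?thesis unfolding btf_decomp_def using c1 c2 c3 c4 c5 by blast
qed


lemma vb_mem: "visits_before S a b \<Longrightarrow> a \<in> set S \<and> b \<in> set S"
  unfolding visits_before_def by (metis nth_mem order.strict_trans)

lemma vb_asym:
  assumes "distinct S" "visits_before S a b" shows "\<not> visits_before S b a"
proof
  assume "visits_before S b a"
  then obtain p' q' where pq': "p' < q'" "q' < length S" "S ! p' = b" "S ! q' = a"
    unfolding visits_before_def by blast
  obtain p q where pq: "p < q" "q < length S" "S ! p = a" "S ! q = b"
    using assms(2) unfolding visits_before_def by blast
  have "p = q'" using pq pq' assms(1) nth_eq_iff_index_eq by (metis order.strict_trans)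
  moreover have "q = p'" using pq pq' assms(1) nth_eq_iff_index_eq by (metis order.strict_trans)
  ultimately show False using pq pq' by simp
qed

lemma vb_neq:
  assumes "distinct S" "visits_before S a b" shows "a \<noteq> b"
  using vb_asym[OF assms] assms(2) by blast

lemma vb_total:
  assumes "distinct S" "a \<in> set S" "b \<in> set S" "a \<noteq> b"
  shows "visits_before S a b \<or> visits_before S b a"
proof -
  obtain p where p: "p < length S" "S ! p = a" using assms(2) by (meson in_set_conv_nth)
  obtain q where q: "q < length S" "S ! q = b" using assms(3) by (meson in_set_conv_nth)
  have "p \<noteq> q" using p q assms(4) by auto
  then show ?thesis unfolding visits_before_def using p q by (metis linorder_neqE_nat)
qed

lemma vb_split:
  assumes "distinct S" "visits_before S a b"
  obtains ys us ws where "S = ys @ a # us @ b # ws"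
proof -
  obtain ys zs where "S = ys @ a # zs" "b \<in> set zs" using assms visits_before_iff by metis
  moreover obtain us ws where "zs = us @ b # ws" using calculation(2) by (meson split_list)
  ultimately show ?thesis using that by blast
qed

lemma vb_intro:
  assumes "S = ys @ a # us @ b # ws" "distinct S"
  shows "visits_before S a b"
proof -
  have "b \<in> set (us @ b # ws)" by simp
  then show ?thesis using visits_before_iff[OF assms(2)] assms(1) by blast
qed

lemma rtrancl_mono_set:
  assumes "(a, b) \<in> (Restr R X)\<^sup>*" "X \<subseteq> Y" shows "(a, b) \<in> (Restr R Y)\<^sup>*"
  using assms(1) by (rule rtrancl_mono[THEN subsetD, rotated]) (use assms(2) in auto)

locale net =
  fixes V :: "'v set" and E :: "('v \<times> 'v) set" and I :: "'v set" and out :: 'v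
  assumes core: "core_network V E I out" and two: "card I \<ge> 2"
begin

lemma finV: "finite V" and EV: "E \<subseteq> V \<times> V" and IV: "I \<subseteq> V" and outV: "out \<in> V"
  and outI: "out \<notin> I"
  and down: "\<And>v. v \<in> V \<Longrightarrow> (v, out) \<in> E\<^sup>*"
  and up: "\<And>v. v \<in> V \<Longrightarrow> \<exists>i\<in>I. (i, v) \<in> E\<^sup>*"
  using core unfolding core_network_def downstream_def by auto

lemma finI: "finite I" using finV IV finite_subset by blast

lemma I_ne: "I \<noteq> {}" using two by auto

lemma two_inputs: obtains i1 i2 where "i1 \<in> I" "i2 \<in> I" "i1 \<noteq> i2"
proof -
  have "\<not> (\<forall>a\<in>I. \<forall>b\<in>I. a = b)"
  proof
    assume "\<forall>a\<in>I. \<forall>b\<in>I. a = b"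
    then have "card I \<le> Suc 0" using card_le_Suc0_iff_eq[OF finI] by blast
    then show False using two by simp
  qed
  then show ?thesis using that by blast
qed

lemma RestrV: "Restr E V = E" using EV by auto

lemma reach_V: "(a, x) \<in> E\<^sup>* \<Longrightarrow> a \<in> V \<Longrightarrow> x \<in> V"
  by (induction rule: rtrancl_induct) (use EV in auto)

lemma path_V:
  assumes "simple_path E a b S" "a \<in> V" shows "set S \<subseteq> V"
proof
  fix x assume "x \<in> set S"
  then have "(a, x) \<in> (Restr E (set S))\<^sup>*" using path_from_mem(2)[OF assms(1)] by blast
  then have "(a, x) \<in> E\<^sup>*" using rtrancl_mono[of "Restr E (set S)" E] by blast
  then show "x \<in> V" using reach_V assms(2) by blast
qed

lemma path_avoid:
  assumes "simple_path E a b S" "a \<in> V" "set S \<subseteq> X"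
  shows "(a, b) \<in> (Restr E (X \<inter> V))\<^sup>*"
proof -
  have "set S \<subseteq> X \<inter> V" using assms path_V by blast
  then show ?thesis using rtrancl_mono_set[OF path_rtrancl[OF assms(1)]] by blast
qed

lemma ss_char:
  "abs_super_simple V E I out v \<longleftrightarrow> v \<in> V \<and> (\<forall>i\<in>I. i \<noteq> v \<longrightarrow> (i, out) \<notin> (Restr E (V - {v}))\<^sup>*)"
proof
  assume ss: "abs_super_simple V E I out v"
  show "v \<in> V \<and> (\<forall>i\<in>I. i \<noteq> v \<longrightarrow> (i, out) \<notin> (Restr E (V - {v}))\<^sup>*)"
  proof (intro conjI ballI impI notI)
    show "v \<in> V" using ss unfolding abs_super_simple_def by simp
  next
    fix i assume i: "i \<in> I" "i \<noteq> v" "(i, out) \<in> (Restr E (V - {v}))\<^sup>*"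
    have "i \<in> V - {v}" using i IV by auto
    then obtain S where S: "simple_path E i out S" "set S \<subseteq> V - {v}" using walk_to_path[OF i(3)] by blast
    then show False using ss i unfolding abs_super_simple_def by blast
  qed
next
  assume H: "v \<in> V \<and> (\<forall>i\<in>I. i \<noteq> v \<longrightarrow> (i, out) \<notin> (Restr E (V - {v}))\<^sup>*)"
  show "abs_super_simple V E I out v" unfolding abs_super_simple_def
  proof (intro conjI ballI allI impI)
    show "v \<in> V" using H by simp
  next
    fix i S assume i: "i \<in> I" and S: "simple_path E i out S"
    show "v \<in> set S"
    proof (rule ccontr)
      assume nv: "v \<notin> set S"
      have iv: "i \<noteq> v" using nv S unfolding simple_path_def by (cases S) auto
      have iV: "i \<in> V" using subsetD[OF IV i] .
      have "set S \<subseteq> V - {v}" using path_V[OF S iV] nv by blast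
      then have "(i, out) \<in> (Restr E ((V - {v}) \<inter> V))\<^sup>*"
        using path_avoid[OF S iV] by blast
      then have "(i, out) \<in> (Restr E (V - {v}))\<^sup>*" by (simp add: Int_absorb2 Diff_subset)
      then show False using H i iv by blast
    qed
  qed
qed

lemma path_exists: obtains i0 S0 where "i0 \<in> I" "simple_path E i0 out S0"
proof -
  obtain i0 where i0: "i0 \<in> I" "(i0, out) \<in> E\<^sup>*" using up outV by blast
  then have "(i0, out) \<in> (Restr E V)\<^sup>*" using RestrV by simp
  moreover have "i0 \<in> V" using subsetD[OF IV i0(1)] .
  ultimately obtain S0 where "simple_path E i0 out S0" using walk_to_path[of i0 out E V] by blast
  then show ?thesis using that i0 by blast
qed

lemma path_last: "simple_path E i out S \<Longrightarrow> out \<in> set S"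
  unfolding simple_path_def by auto

lemma path_hd: "simple_path E i out S \<Longrightarrow> i \<in> set S"
  unfolding simple_path_def by auto

lemma ss_in_path: "abs_super_simple V E I out v \<Longrightarrow> i \<in> I \<Longrightarrow> simple_path E i out S \<Longrightarrow> v \<in> set S"
  unfolding abs_super_simple_def by blast

lemma ss_out: "abs_super_simple V E I out out"
  unfolding abs_super_simple_def using outV path_last by blast

lemma ss_consistent:
  assumes a: "abs_super_simple V E I out a" and b: "abs_super_simple V E I out b"
    and S: "i \<in> I" "simple_path E i out S" and S': "i' \<in> I" "simple_path E i' out S'"
    and ab: "visits_before S a b"
  shows "visits_before S' a b"
proof (rule ccontr)
  assume nab: "\<not> visits_before S' a b"
  have dS: "distinct S" "distinct S'" using S S' unfolding simple_path_def by auto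
  have neq: "a \<noteq> b" using vb_neq[OF dS(1) ab] .
  have mem: "a \<in> set S'" "b \<in> set S'" using a b S' ss_in_path by auto
  have ba: "visits_before S' b a" using vb_total[OF dS(2) mem neq] nab by blast
  obtain ys us ws where sp: "S = ys @ a # us @ b # ws" using vb_split[OF dS(1) ab] .
  obtain ys' us' ws' where sp': "S' = ys' @ b # us' @ a # ws'" using vb_split[OF dS(2) ba] .
  have p1: "simple_path E i' b (ys' @ [b])" using prefix_path[of E i' out ys' b "us' @ a # ws'"] S'(2) sp' by simp
  have p2: "simple_path E b out (b # ws)" using suffix_path[of E i out "ys @ a # us" b ws] S(2) sp by simp
  have a1: "a \<notin> set (ys' @ [b])" using dS(2) sp' neq by auto
  have a2: "a \<notin> set (b # ws)" using dS(1) sp neq by auto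
  have i'V: "i' \<in> V" using subsetD[OF IV S'(1)] .
  have i'a: "i' \<noteq> a" using a1 p1 unfolding simple_path_def by (cases ys') auto
  have s1: "set (ys' @ [b]) \<subseteq> - {a}" using a1 by blast
  have w1: "(i', b) \<in> (Restr E (- {a} \<inter> V))\<^sup>*" using path_avoid[OF p1 i'V s1] .
  have bV: "b \<in> V" using b unfolding abs_super_simple_def by simp
  have s2: "set (b # ws) \<subseteq> - {a}" using a2 by blast
  have w2: "(b, out) \<in> (Restr E (- {a} \<inter> V))\<^sup>*" using path_avoid[OF p2 bV s2] .
  have eq: "- {a} \<inter> V = V - {a}" by blast
  have "(i', out) \<in> (Restr E (V - {a}))\<^sup>*" using rtrancl_trans[OF w1 w2] unfolding eq .
  then show False using a S'(1) i'a ss_char by blast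
qed

end


context net begin

abbreviation "ss \<equiv> abs_super_simple V E I out"
abbreviation "rho \<equiv> rho1 V E I out"

lemma rho_props:
  "ss rho \<and> (\<forall>r'. ss r' \<and> r' \<noteq> rho \<longrightarrow> ss_greater E I out rho r')"
proof -
  obtain i0 S0 where S0: "i0 \<in> I" "simple_path E i0 out S0" using path_exists by blast
  have ds: "distinct S0" using S0 unfolding simple_path_def by simp
  define P where "P p = (p < length S0 \<and> ss (S0 ! p))" for p
  have ne: "S0 \<noteq> []" using S0 unfolding simple_path_def by simp
  have "last S0 = S0 ! (length S0 - 1)" using ne by (simp add: last_conv_nth)
  hence "P (length S0 - 1)" unfolding P_def using ne S0 ss_out unfolding simple_path_def by simp
  define p0 where "p0 = (LEAST p. P p)"
  have Pp0: "P p0" unfolding p0_def by (rule LeastI) fact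
  define r0 where "r0 = S0 ! p0"
  define Q where "Q r = (ss r \<and> (\<forall>r'. ss r' \<and> r' \<noteq> r \<longrightarrow> ss_greater E I out r r'))" for r
  have Qr0: "Q r0" unfolding Q_def
  proof (intro conjI allI impI)
    show "ss r0" using Pp0 unfolding P_def r0_def by simp
  next
    fix r' assume r': "ss r' \<and> r' \<noteq> r0"
    have "r' \<in> set S0" using ss_in_path r' S0 by blast
    then obtain q where q: "q < length S0" "S0 ! q = r'" by (meson in_set_conv_nth)
    have "P q" unfolding P_def using q r' by simp
    hence "p0 \<le> q" unfolding p0_def by (rule Least_le)
    moreover have "p0 \<noteq> q" using q r' unfolding r0_def by auto
    ultimately have "p0 < q" by simp
    hence vb: "visits_before S0 r0 r'" unfolding visits_before_def r0_def using q by blast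
    have ssr0: "ss r0" using Pp0 unfolding P_def r0_def by simp
    show "ss_greater E I out r0 r'" unfolding ss_greater_def
      using ss_consistent[OF ssr0 _ S0 _ _ vb] r' by blast
  qed
  have uniq: "r = r0" if "Q r" for r
  proof (rule ccontr)
    assume ne: "r \<noteq> r0"
    have "ss_greater E I out r0 r" using Qr0 that ne unfolding Q_def by blast
    hence v1: "visits_before S0 r0 r" using S0 unfolding ss_greater_def by blast
    have "ss_greater E I out r r0" using Qr0 that ne unfolding Q_def by metis
    hence v2: "visits_before S0 r r0" using S0 unfolding ss_greater_def by blast
    show False using vb_asym[OF ds v1] v2 by simp
  qed
  have "rho = r0" unfolding rho1_def using the_equality[of Q r0] Qr0 uniq unfolding Q_def by blast
  then show ?thesis using Qr0 unfolding Q_def by simp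
qed

lemma rho_ss: "ss rho" using rho_props by blast
lemma rho_V: "rho \<in> V" using rho_ss unfolding abs_super_simple_def by simp
lemma rho_in_path: "i \<in> I \<Longrightarrow> simple_path E i out S \<Longrightarrow> rho \<in> set S"
  using ss_in_path[OF rho_ss] by blast
lemma rho_first:
  assumes "ss r" "r \<noteq> rho" "i \<in> I" "simple_path E i out S"
  shows "visits_before S rho r"
  using rho_props assms unfolding ss_greater_def by blast
lemma rho_no_avoid: "i \<in> I \<Longrightarrow> i \<noteq> rho \<Longrightarrow> (i, out) \<notin> (Restr E (V - {rho}))\<^sup>*"
  using rho_ss ss_char by blast

definition Hs where
  "Hs = {v \<in> V. v \<noteq> rho \<and> (\<exists>i\<in>I. i \<noteq> rho \<and> (i, v) \<in> (Restr E (V - {rho}))\<^sup>*)}"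

definition Yn where "Yn = insert rho Hs"

lemma Hs_V: "Hs \<subseteq> V" unfolding Hs_def by auto
lemma Yn_V: "Yn \<subseteq> V" unfolding Yn_def using Hs_V rho_V by auto
lemma rho_notin_Hs: "rho \<notin> Hs" unfolding Hs_def by auto

lemma Hs_step:
  assumes "x \<in> Hs" "(x, y) \<in> (Restr E (V - {rho}))\<^sup>*" shows "y \<in> Hs"
proof -
  obtain i where i: "i \<in> I" "i \<noteq> rho" "(i, x) \<in> (Restr E (V - {rho}))\<^sup>*" using assms(1) unfolding Hs_def by blast
  have r: "(i, y) \<in> (Restr E (V - {rho}))\<^sup>*" using rtrancl_trans[OF i(3) assms(2)] .
  have "y \<in> V - {rho}"
  proof (cases "x = y")
    case True then show ?thesis using assms(1) unfolding Hs_def by auto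
  next
    case False
    then have "(x, y) \<in> (Restr E (V - {rho}))\<^sup>+" using assms(2) by (simp add: rtrancl_eq_or_trancl)
    then obtain w where "(w, y) \<in> Restr E (V - {rho})" by (meson tranclE)
    then show ?thesis by blast
  qed
  then show ?thesis unfolding Hs_def using i r by blast
qed

lemma I_Hs: "i \<in> I \<Longrightarrow> i \<noteq> rho \<Longrightarrow> i \<in> Hs"
  unfolding Hs_def using IV by blast

lemma I_Yn: "I \<subseteq> Yn" unfolding Yn_def using I_Hs by blast

lemma Hs_no_out: "x \<in> Hs \<Longrightarrow> (x, out) \<notin> (Restr E (V - {rho}))\<^sup>*"
proof
  assume "x \<in> Hs" "(x, out) \<in> (Restr E (V - {rho}))\<^sup>*"
  then obtain i where i: "i \<in> I" "i \<noteq> rho" "(i, x) \<in> (Restr E (V - {rho}))\<^sup>*" unfolding Hs_def by blast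
  then have "(i, out) \<in> (Restr E (V - {rho}))\<^sup>*" using \<open>(x, out) \<in> _\<close> by (meson rtrancl_trans)
  then show False using rho_no_avoid i by blast
qed

lemma out_notin_Hs: "out \<notin> Hs" using Hs_no_out by blast

lemma after_rho:
  assumes S: "i \<in> I" "simple_path E i out S" and vb: "visits_before S rho v"
  shows "v \<notin> Hs"
proof
  assume vH: "v \<in> Hs"
  have ds: "distinct S" using S unfolding simple_path_def by simp
  obtain ys us ws where sp: "S = ys @ rho # us @ v # ws" using vb_split[OF ds vb] .
  have p2: "simple_path E v out (v # ws)" using suffix_path[of E i out "ys @ rho # us" v ws] S(2) sp by simp
  have a2: "set (v # ws) \<subseteq> - {rho}" using ds sp by auto
  have vV: "v \<in> V" using vH Hs_V by blast
  have "(v, out) \<in> (Restr E (- {rho} \<inter> V))\<^sup>*" using path_avoid[OF p2 vV a2] .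
  moreover have "- {rho} \<inter> V = V - {rho}" by blast
  ultimately show False using Hs_no_out[OF vH] by simp
qed

lemma before_rho:
  assumes S: "i \<in> I" "simple_path E i out S" and vb: "visits_before S v rho"
  shows "v \<in> Hs"
proof -
  have ds: "distinct S" using S unfolding simple_path_def by simp
  obtain ys us ws where sp: "S = ys @ v # us @ rho # ws" using vb_split[OF ds vb] .
  have p1: "simple_path E i v (ys @ [v])" using prefix_path[of E i out ys v "us @ rho # ws"] S(2) sp by simp
  have a1: "set (ys @ [v]) \<subseteq> - {rho}" using ds sp by auto
  have iV: "i \<in> V" using subsetD[OF IV S(1)] .
  have ir: "i \<noteq> rho" using a1 p1 unfolding simple_path_def by (cases ys) auto
  have "(i, v) \<in> (Restr E (- {rho} \<inter> V))\<^sup>*" using path_avoid[OF p1 iV a1] .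
  moreover have "- {rho} \<inter> V = V - {rho}" by blast
  moreover have "v \<in> V" using path_V[OF S(2) iV] vb_mem[OF vb] by blast
  moreover have "v \<noteq> rho" using vb_neq[OF ds vb] .
  ultimately show ?thesis unfolding Hs_def using S(1) ir by auto
qed

lemma path_Yn:
  assumes S: "i \<in> I" "simple_path E i out S" and x: "x \<in> set S"
  shows "x \<in> Yn \<longleftrightarrow> (x = rho \<or> visits_before S x rho)"
proof -
  have ds: "distinct S" using S unfolding simple_path_def by simp
  have r: "rho \<in> set S" using rho_in_path S by blast
  show ?thesis
  proof (cases "x = rho")
    case True then show ?thesis unfolding Yn_def by simp
  next
    case False
    then have "visits_before S x rho \<or> visits_before S rho x" using vb_total[OF ds x r] by blast
    then show ?thesis using before_rho[OF S] after_rho[OF S] False unfolding Yn_def by auto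
  qed
qed

lemma reach_rho:
  assumes "(y, out) \<in> (Restr E Z)\<^sup>*" "y \<in> Hs"
  shows "(y, rho) \<in> (Restr E (Z \<inter> Yn))\<^sup>*"
  using assms
proof (induction rule: converse_rtrancl_induct)
  case base then show ?case using out_notin_Hs by simp
next
  case (step y z)
  have yz: "(y, z) \<in> E" "y \<in> Z" "z \<in> Z" using step(1) by auto
  have yY: "y \<in> Yn" using step(4) unfolding Yn_def by simp
  show ?case
  proof (cases "z = rho")
    case True
    then have "(y, z) \<in> Restr E (Z \<inter> Yn)" using yz yY unfolding Yn_def by auto
    then show ?thesis using True by (simp add: r_into_rtrancl)
  next
    case False
    have "z \<in> V" using yz EV by auto
    moreover have "y \<in> V - {rho}" using step(4) unfolding Hs_def by auto
    ultimately have "(y, z) \<in> (Restr E (V - {rho}))\<^sup>*" using yz False by auto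
    then have zH: "z \<in> Hs" using Hs_step[OF step(4)] by blast
    have "(y, z) \<in> Restr E (Z \<inter> Yn)" using yz yY zH unfolding Yn_def by auto
    then show ?thesis using step(3)[OF zH] by (rule converse_rtrancl_into_rtrancl)
  qed
qed

lemma Hs_from_input:
  assumes "x \<in> Hs" obtains i where "i \<in> I" "i \<noteq> rho" "(i, x) \<in> (Restr E Hs)\<^sup>*"
proof -
  obtain i where i: "i \<in> I" "i \<noteq> rho" "(i, x) \<in> (Restr E (V - {rho}))\<^sup>*" using assms unfolding Hs_def by blast
  have iH: "i \<in> Hs" using I_Hs i by blast
  have "(i, y) \<in> (Restr E Hs)\<^sup>*" if "(i, y) \<in> (Restr E (V - {rho}))\<^sup>*" for y
    using that
  proof (induction rule: rtrancl_induct)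
    case base then show ?case by simp
  next
    case (step y z)
    have yH: "y \<in> Hs" using Hs_step[OF iH step(1)] .
    have zH: "z \<in> Hs" using Hs_step[OF iH] step(1,2) by (meson rtrancl.rtrancl_into_rtrancl)
    have "(y, z) \<in> Restr E Hs" using step(2) yH zH by auto
    then show ?case using step(3) by (meson rtrancl.rtrancl_into_rtrancl)
  qed
  then show ?thesis using that i by blast
qed

end


context net begin

abbreviation "M \<equiv> hmat V E I out"
definition CY where "CY = insert out Hs"

lemma hm_col: "r \<in> V \<Longrightarrow> c \<in> V \<Longrightarrow> c \<noteq> out \<Longrightarrow> (M r c \<noteq> None) = (c = r \<or> (c, r) \<in> E)"
  unfolding hmat_def by auto

lemma hm_out: "r \<in> V \<Longrightarrow> (M r out \<noteq> None) = (r \<in> I)"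
  unfolding hmat_def using outV by auto

lemma hm_outside: "r \<notin> V \<Longrightarrow> M r c = None" "c \<notin> V \<Longrightarrow> M r c = None"
  unfolding hmat_def by auto

lemma finHs: "finite Hs" using Hs_V finV finite_subset by blast
lemma finYn: "finite Yn" unfolding Yn_def using finHs by simp
lemma finCY: "finite CY" unfolding CY_def using finHs by simp

lemma card_Yn_CY: "card Yn = card CY"
  unfolding Yn_def CY_def using finHs rho_notin_Hs out_notin_Hs by simp

lemma Hs_ne: "Hs \<noteq> {}"
proof -
  obtain i1 i2 where "i1 \<in> I" "i2 \<in> I" "i1 \<noteq> i2" using two_inputs by blast
  then have "i1 \<in> Hs \<or> i2 \<in> Hs" using I_Hs by metis
  then show ?thesis by blast
qed

lemma CY_V: "CY \<subseteq> V" unfolding CY_def using Hs_V outV by auto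

lemma zero_below: "x \<in> V \<Longrightarrow> x \<notin> Yn \<Longrightarrow> c \<in> CY \<Longrightarrow> M x c = None"
proof (rule ccontr)
  assume x: "x \<in> V" "x \<notin> Yn" and c: "c \<in> CY" and nz: "M x c \<noteq> None"
  show False
  proof (cases "c = out")
    case True
    then have "x \<in> I" using hm_out x nz by blast
    then show False using I_Yn x by blast
  next
    case False
    then have cH: "c \<in> Hs" using c unfolding CY_def by simp
    have "c = x \<or> (c, x) \<in> E" using hm_col[OF x(1) _ False] cH Hs_V nz by blast
    moreover have "c \<noteq> x" using cH x unfolding Yn_def by auto
    ultimately have e: "(c, x) \<in> E" by simp
    have "x \<noteq> rho" using x unfolding Yn_def by auto
    then have "(c, x) \<in> (Restr E (V - {rho}))\<^sup>*" using e x cH Hs_V rho_notin_Hs by blast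
    then have "x \<in> Hs" using Hs_step[OF cH] by blast
    then show False using x unfolding Yn_def by simp
  qed
qed

lemma Y_fi: "fully_indecomposable M Yn CY"
proof -
  have cardge: "card Yn \<ge> 1" using finYn unfolding Yn_def by (simp add: card_gt_0_iff Suc_leI)
  have card2: "card Yn \<noteq> 1"
  proof
    assume "card Yn = 1"
    then have "card Hs = 0" unfolding Yn_def using finHs rho_notin_Hs by simp
    then show False using Hs_ne finHs by simp
  qed
  have main: "\<exists>a\<in>A. \<exists>c\<in>B. M a c \<noteq> None"
    if AY: "A \<subseteq> Yn" and BC: "B \<subseteq> CY" and Ane: "A \<noteq> {}" and Bne: "B \<noteq> {}"
      and sum: "card A + card B = card Yn" for A B
  proof (rule ccontr)
    assume "\<not> (\<exists>a\<in>A. \<exists>c\<in>B. M a c \<noteq> None)"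
    hence z: "\<And>a c. a \<in> A \<Longrightarrow> c \<in> B \<Longrightarrow> M a c = None" by blast
    define B' where "B' = CY - B"
    have finA: "finite A" using AY finYn finite_subset by blast
    have finB: "finite B" using BC finCY finite_subset by blast
    have finB': "finite B'" unfolding B'_def using finCY by simp
    have cB': "card B' = card A" unfolding B'_def using card_Diff_subset[OF finB BC] sum card_Yn_CY by simp
    have AV: "A \<subseteq> V" using AY Yn_V by blast
    have f1: "a \<in> B'" if "a \<in> A" "a \<in> Hs" for a
    proof -
      have aV: "a \<in> V" using that Hs_V by blast
      have ao: "a \<noteq> out" using that out_notin_Hs by blast
      have nz: "M a a \<noteq> None" using hm_col[OF aV aV ao] by simp
      have "a \<notin> B"
      proof
        assume "a \<in> B" then show False using z[OF that(1)] nz by simp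
      qed
      then show ?thesis unfolding B'_def CY_def using that by blast
    qed
    have f2: "c \<in> B'" if "a \<in> A" "c \<in> Hs" "(c, a) \<in> E" for a c
    proof -
      have aV: "a \<in> V" using that AV by blast
      have cV: "c \<in> V" using that Hs_V by blast
      have co: "c \<noteq> out" using that out_notin_Hs by blast
      have nz: "M a c \<noteq> None" using hm_col[OF aV cV co] that by simp
      have "c \<notin> B"
      proof
        assume "c \<in> B" then show False using z[OF that(1)] nz by simp
      qed
      then show ?thesis unfolding B'_def CY_def using that by blast
    qed
    have f3: "out \<in> B'" if "a \<in> A" "a \<in> I" for a
    proof -
      have aV: "a \<in> V" using that AV by blast
      have nz: "M a out \<noteq> None" using hm_out[OF aV] that by simp
      have "out \<notin> B"
      proof
        assume "out \<in> B" then show False using z[OF that(1)] nz by simp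
      qed
      then show ?thesis unfolding B'_def CY_def by blast
    qed
    show False
    proof (cases "rho \<in> A")
      case False
      have AH: "A \<subseteq> Hs" using AY False unfolding Yn_def by blast
      have AB': "A \<subseteq> B'" using f1 AH by blast
      have AeqB': "A = B'" using card_subset_eq[OF finB' AB'] cB' by simp
      have noI: "a \<notin> I" if "a \<in> A" for a
      proof
        assume "a \<in> I"
        then have "out \<in> A" using f3 that AeqB' by blast
        then show False using AH out_notin_Hs by blast
      qed
      obtain a where a: "a \<in> A" using Ane by blast
      obtain i where i: "i \<in> I" "(i, a) \<in> (Restr E Hs)\<^sup>*" using Hs_from_input[of a] a AH by blast
      have "x \<in> A" if "(x, a) \<in> (Restr E Hs)\<^sup>*" for x
        using that
      proof (induction rule: converse_rtrancl_induct)
        case base then show ?case using a .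
      next
        case (step x y)
        then have "x \<in> Hs" "(x, y) \<in> E" by auto
        then show ?case using f2[OF step(3)] AeqB' by blast
      qed
      then have "i \<in> A" using i by blast
      then show False using noI i by blast
    next
      case True
      define A' where "A' = A - {rho}"
      have A'H: "A' \<subseteq> Hs" using AY unfolding A'_def Yn_def by blast
      have A'B': "A' \<subseteq> B'" using f1 A'H unfolding A'_def by blast
      have cA': "card A' = card A - 1" unfolding A'_def using True finA by simp
      have "card A > 0" using True finA card_gt_0_iff by blast
      then have cA: "card A \<ge> 1" by simp
      have "card (B' - A') = 1" using card_Diff_subset[OF _ A'B'] finB' finite_subset[OF A'B' finB'] cB' cA' cA by simp
      then obtain e where e: "B' - A' = {e}" by (meson card_1_singletonE)
      have B'eq: "B' = insert e A'" using e A'B' by blast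
      have eCY: "e \<in> CY" using e unfolding B'_def by blast
      have backw: "y \<in> A" if "(y, rho) \<in> (Restr E (Z \<inter> Yn))\<^sup>*" "e \<in> Hs \<longrightarrow> e \<notin> Z" for y Z
        using that(1)
      proof (induction rule: converse_rtrancl_induct)
        case base then show ?case using True .
      next
        case (step x y)
        have xy: "(x, y) \<in> E" "x \<in> Z" "x \<in> Yn" using step(1) by auto
        show ?case
        proof (cases "x = rho")
          case True then show ?thesis using \<open>rho \<in> A\<close> by simp
        next
          case False
          then have xH: "x \<in> Hs" using xy unfolding Yn_def by simp
          have "x \<in> B'" using f2[OF step(3) xH xy(1)] .
          moreover have "x \<noteq> e" using xy(2) that(2) xH by blast
          ultimately show ?thesis using B'eq unfolding A'_def by blast
        qed
      qed
      show False
      proof (cases "e = out")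
        case True
        have "Hs \<subseteq> A"
        proof
          fix x assume xH: "x \<in> Hs"
          have "(x, out) \<in> (Restr E V)\<^sup>*" using down xH Hs_V RestrV by auto
          then have "(x, rho) \<in> (Restr E (V \<inter> Yn))\<^sup>*" using reach_rho xH by blast
          moreover have "e \<notin> Hs" using True out_notin_Hs by simp
          ultimately show "x \<in> A" using backw by blast
        qed
        then have "A = Yn" using AY \<open>rho \<in> A\<close> unfolding Yn_def by blast
        then have "card B = 0" using sum by simp
        then show False using finB Bne by simp
      next
        case False
        have eH: "e \<in> Hs" using eCY False unfolding CY_def by simp
        have noout: "out \<notin> B'" using B'eq False A'H out_notin_Hs by blast
        have noI: "a \<notin> I" if "a \<in> A" for a using f3[OF that] noout by blast
        have "ss e"
        proof (subst ss_char, intro conjI ballI impI notI)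
          show "e \<in> V" using eH Hs_V by blast
        next
          fix i assume i: "i \<in> I" "i \<noteq> e" and p: "(i, out) \<in> (Restr E (V - {e}))\<^sup>*"
          show False
          proof (cases "i = rho")
            case True then show False using noI i \<open>rho \<in> A\<close> by blast
          next
            case False
            then have iH: "i \<in> Hs" using I_Hs i by blast
            have "(i, rho) \<in> (Restr E ((V - {e}) \<inter> Yn))\<^sup>*" using reach_rho[OF p iH] .
            then have "i \<in> A" using backw by blast
            then show False using noI i by blast
          qed
        qed
        moreover have "e \<noteq> rho" using eH rho_notin_Hs by blast
        moreover obtain i0 S0 where S0: "i0 \<in> I" "simple_path E i0 out S0" using path_exists by blast
        ultimately have "visits_before S0 rho e" using rho_first by blast
        then have "e \<notin> Hs" using after_rho S0 by blast
        then show False using eH by simp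
      qed
    qed
  qed
  show ?thesis unfolding fully_indecomposable_def
    using finYn finCY card_Yn_CY cardge card2 main by blast
qed

end


lemma vb_nth:
  assumes "distinct S" "p < length S" "q < length S"
  shows "visits_before S (S ! p) (S ! q) \<longleftrightarrow> p < q"
proof
  assume "visits_before S (S ! p) (S ! q)"
  then obtain p' q' where pq: "p' < q'" "q' < length S" "S ! p' = S ! p" "S ! q' = S ! q"
    unfolding visits_before_def by blast
  have "p' = p" using pq assms nth_eq_iff_index_eq by (metis order.strict_trans)
  moreover have "q' = q" using pq assms nth_eq_iff_index_eq by metis
  ultimately show "p < q" using pq by simp
next
  assume "p < q" then show "visits_before S (S ! p) (S ! q)" unfolding visits_before_def using assms by blast
qed

context net begin

definition muS :: "'v list \<Rightarrow> 'v \<Rightarrow> 'v" where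
  "muS S x = (if x = hd S then out else (case map_of (zip (tl S) (butlast S)) x of Some y \<Rightarrow> y | None \<Rightarrow> x))"

context
  fixes i S assumes iI: "i \<in> I" and Sp: "simple_path E i out S"
begin

lemma S_ne: "S \<noteq> []" using Sp unfolding simple_path_def by simp
lemma S_dist: "distinct S" using Sp unfolding simple_path_def by simp
lemma S_hd: "hd S = i" using Sp unfolding simple_path_def by simp
lemma S_0: "S ! 0 = i" using S_hd S_ne by (simp add: hd_conv_nth)
lemma S_last: "S ! (length S - 1) = out" using Sp S_ne unfolding simple_path_def by (simp add: last_conv_nth)
lemma S_V: "set S \<subseteq> V" using path_V[OF Sp] iI IV by blast
lemma S_succ: "Suc j < length S \<Longrightarrow> (S ! j, S ! Suc j) \<in> E"
  using successively_nth[of "\<lambda>x y. (x, y) \<in> E" S j] Sp unfolding simple_path_def by simp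

lemma mu_hd: "muS S (S ! 0) = out" unfolding muS_def using S_hd S_0 by simp

lemma mu_nth:
  assumes j: "Suc j < length S" shows "muS S (S ! Suc j) = S ! j"
proof -
  have "S ! Suc j \<noteq> S ! 0" using nth_eq_iff_index_eq[OF S_dist j, of 0] j S_ne by simp
  then have ne: "S ! Suc j \<noteq> hd S" using S_hd S_0 by simp
  have l: "length (tl S) = length (butlast S)" by simp
  have d: "distinct (tl S)" using S_dist by (simp add: distinct_tl)
  have jl: "j < length (butlast S)" using j by simp
  have "map_of (zip (tl S) (butlast S)) (tl S ! j) = Some (butlast S ! j)"
    using map_of_zip_nth[OF l d jl] .
  moreover have "tl S ! j = S ! Suc j" using j by (simp add: nth_tl)
  moreover have "butlast S ! j = S ! j" using jl by (simp add: nth_butlast)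
  ultimately show ?thesis unfolding muS_def using ne by simp
qed

lemma mu_notin: "x \<notin> set S \<Longrightarrow> muS S x = x"
proof -
  assume x: "x \<notin> set S"
  have "x \<noteq> hd S" using x S_ne by auto
  moreover have "x \<notin> set (tl S)" using x by (meson list.set_sel(2) S_ne)
  moreover have "map_of (zip (tl S) (butlast S)) x = None" using calculation(2) by simp
  ultimately show ?thesis unfolding muS_def by (simp del: map_of_zip_is_None)
qed

lemma mu_S_cases:
  assumes "x \<in> set S"
  obtains "x = S ! 0" "muS S x = out" | j where "Suc j < length S" "x = S ! Suc j" "muS S x = S ! j"
proof -
  obtain p where p: "p < length S" "x = S ! p" using assms by (metis in_set_conv_nth)
  show ?thesis
  proof (cases p)
    case 0 then show ?thesis using that(1) p mu_hd by simp
  next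
    case (Suc j) then show ?thesis using that(2) p mu_nth by simp
  qed
qed

lemma out_in_S: "out \<in> set S" using path_last[OF Sp] .

lemma mu_in_S: "x \<in> set S \<Longrightarrow> muS S x \<in> set S"
  by (erule mu_S_cases) (use out_in_S in auto)

lemma mu_inj: "inj_on (muS S) V"
proof (rule inj_onI)
  fix x y assume x: "x \<in> V" and y: "y \<in> V" and eq: "muS S x = muS S y"
  show "x = y"
  proof (cases "x \<in> set S")
    case xS: True
    show ?thesis
    proof (cases "y \<in> set S")
      case yS: True
      have L: "length S - 1 < length S" using S_ne by simp
      show ?thesis
      proof (rule mu_S_cases[OF xS]; rule mu_S_cases[OF yS])
        assume "x = S ! 0" "y = S ! 0" then show ?thesis by simp
      next
        fix j assume a: "x = S ! 0" "muS S x = out" "Suc j < length S" "y = S ! Suc j" "muS S y = S ! j"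
        have "S ! j = S ! (length S - 1)" using a eq S_last by simp
        then have "j = length S - 1" using S_dist a(3) L nth_eq_iff_index_eq by (metis Suc_lessD)
        then show ?thesis using a(3) by simp
      next
        fix j assume a: "Suc j < length S" "x = S ! Suc j" "muS S x = S ! j" "y = S ! 0" "muS S y = out"
        have "S ! j = S ! (length S - 1)" using a eq S_last by simp
        then have "j = length S - 1" using S_dist a(1) L nth_eq_iff_index_eq by (metis Suc_lessD)
        then show ?thesis using a(1) by simp
      next
        fix j j' assume a: "Suc j < length S" "x = S ! Suc j" "muS S x = S ! j"
          "Suc j' < length S" "y = S ! Suc j'" "muS S y = S ! j'"
        have "S ! j = S ! j'" using a eq by simp
        then have "j = j'" using S_dist a(1,4) nth_eq_iff_index_eq by (metis Suc_lessD)
        then show ?thesis using a by simp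
      qed
    next
      case False
      then have "muS S y = y" using mu_notin by simp
      moreover have "muS S x \<in> set S" using mu_in_S xS .
      ultimately show ?thesis using eq False by simp
    qed
  next
    case xn: False
    then have mx: "muS S x = x" using mu_notin by simp
    show ?thesis
    proof (cases "y \<in> set S")
      case True
      then have "muS S y \<in> set S" using mu_in_S by blast
      then show ?thesis using eq mx xn by simp
    next
      case False then show ?thesis using eq mx mu_notin by simp
    qed
  qed
qed

lemma mu_into: "muS S ` V \<subseteq> V"
proof
  fix y assume "y \<in> muS S ` V"
  then obtain x where x: "x \<in> V" "y = muS S x" by blast
  show "y \<in> V"
  proof (cases "x \<in> set S")
    case True
    then have "y \<in> set S" using mu_in_S x by simp
    then show ?thesis using S_V by blast
  next
    case False then show ?thesis using x mu_notin by simp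
  qed
qed

lemma mu_bij: "bij_betw (muS S) V V"
  unfolding bij_betw_def using mu_inj endo_inj_surj[OF finV mu_into mu_inj] by simp

lemma mu_diag: "\<forall>r\<in>V. M r (muS S r) \<noteq> None"
proof
  fix r assume r: "r \<in> V"
  show "M r (muS S r) \<noteq> None"
  proof (cases "r \<in> set S")
    case False
    have "r \<noteq> out" using False out_in_S by blast
    then show ?thesis using False mu_notin hm_col[OF r r] by simp
  next
    case True
    show ?thesis
    proof (rule mu_S_cases[OF True])
      assume "r = S ! 0" "muS S r = out"
      then show ?thesis using hm_out[OF r] S_0 iI by simp
    next
      fix j assume a: "Suc j < length S" "r = S ! Suc j" "muS S r = S ! j"
      have jV: "S ! j \<in> V" using S_V a(1) by (meson Suc_lessD nth_mem subsetD)
      have L: "length S - 1 < length S" using S_ne by simp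
      have "j \<noteq> length S - 1" using a(1) by simp
      then have "S ! j \<noteq> S ! (length S - 1)" using nth_eq_iff_index_eq[OF S_dist Suc_lessD[OF a(1)] L] by simp
      then have "S ! j \<noteq> out" using S_last by simp
      then show ?thesis using hm_col[OF r jV] S_succ[OF a(1)] a by simp
    qed
  qed
qed

lemma mu_img_Y: "muS S ` Yn = CY"
proof
  show "muS S ` Yn \<subseteq> CY"
  proof
    fix c assume "c \<in> muS S ` Yn"
    then obtain y where y: "y \<in> Yn" "c = muS S y" by blast
    show "c \<in> CY"
    proof (cases "y \<in> set S")
      case False
      then have "c = y" using y mu_notin by simp
      moreover have "y \<noteq> rho" using False rho_in_path[OF iI Sp] by blast
      ultimately show ?thesis using y unfolding Yn_def CY_def by simp
    next
      case True
      show ?thesis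
      proof (rule mu_S_cases[OF True])
        assume "y = S ! 0" "muS S y = out" then show ?thesis using y unfolding CY_def by simp
      next
        fix j assume a: "Suc j < length S" "y = S ! Suc j" "muS S y = S ! j"
        have dj: "y = rho \<or> visits_before S y rho" using path_Yn[OF iI Sp True] y by simp
        have "visits_before S (S ! j) y" using vb_nth[OF S_dist] a by simp
        have "visits_before S (S ! j) rho"
        proof (rule disjE[OF dj])
          assume "y = rho" then show ?thesis using \<open>visits_before S (S ! j) y\<close> by simp
        next
          assume vb2: "visits_before S y rho"
          obtain q where q: "q < length S" "S ! q = rho" using rho_in_path[OF iI Sp] by (meson in_set_conv_nth)
          have "Suc j < q" using vb2 vb_nth[OF S_dist a(1) q(1)] a q by simp
          then show ?thesis using vb_nth[OF S_dist _ q(1)] q by simp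
        qed
        then have "S ! j \<in> Hs" using before_rho[OF iI Sp] by blast
        then show ?thesis using a y unfolding CY_def by simp
      qed
    qed
  qed
next
  show "CY \<subseteq> muS S ` Yn"
  proof
    fix c assume c: "c \<in> CY"
    show "c \<in> muS S ` Yn"
    proof (cases "c = out")
      case True
      have "S ! 0 \<in> Yn" using S_0 iI I_Yn by auto
      then show ?thesis using True mu_hd by (metis image_eqI)
    next
      case False
      then have cH: "c \<in> Hs" using c unfolding CY_def by simp
      show ?thesis
      proof (cases "c \<in> set S")
        case False
        then show ?thesis using cH mu_notin unfolding Yn_def by (metis image_eqI insertCI)
      next
        case True
        obtain p where p: "p < length S" "S ! p = c" using True by (meson in_set_conv_nth)
        obtain q where q: "q < length S" "S ! q = rho" using rho_in_path[OF iI Sp] by (meson in_set_conv_nth)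
        have "c \<noteq> rho" using cH rho_notin_Hs by blast
        then have "visits_before S c rho" using path_Yn[OF iI Sp True] cH unfolding Yn_def by simp
        then have pq: "p < q" using vb_nth[OF S_dist p(1) q(1)] p q by simp
        then have sp: "Suc p < length S" using q by simp
        have "S ! Suc p \<in> Yn"
        proof (cases "Suc p = q")
          case True then show ?thesis using q unfolding Yn_def by simp
        next
          case False
          then have "visits_before S (S ! Suc p) rho" using vb_nth[OF S_dist sp q(1)] pq q by simp
          then show ?thesis using before_rho[OF iI Sp] unfolding Yn_def by blast
        qed
        moreover have "muS S (S ! Suc p) = c" using mu_nth[OF sp] p by simp
        ultimately show ?thesis by (metis image_eqI)
      qed
    qed
  qed
qed

end
end


lemma btf_rows: "btf_decomp M' R C bs \<Longrightarrow> (\<Union>l<length bs. fst (bs ! l)) = R"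
  unfolding btf_decomp_def by blast
lemma btf_fi: "btf_decomp M' R C bs \<Longrightarrow> k < length bs \<Longrightarrow> fully_indecomposable M' (fst (bs ! k)) (snd (bs ! k))"
  unfolding btf_decomp_def by blast

context net begin

lemma Dg_mono: "A \<subseteq> B \<Longrightarrow> Dg M' mu A \<subseteq> Dg M' mu B" unfolding Dg_def by auto

lemma Y_sc:
  assumes iI: "i \<in> I" and Sp: "simple_path E i out S" and y: "y \<in> Yn" "y' \<in> Yn"
  shows "(y, y') \<in> (Dg M (muS S) Yn)\<^sup>*"
proof (rule fi_strongly_connected[OF Y_fi _ _ y])
  have "inj_on (muS S) Yn" using inj_on_subset[OF mu_inj[OF iI Sp] Yn_V] .
  then show "bij_betw (muS S) Yn CY" unfolding bij_betw_def using mu_img_Y[OF iI Sp] by simp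
  show "\<forall>r\<in>Yn. M r (muS S r) \<noteq> None" using mu_diag[OF iI Sp] Yn_V by blast
qed

lemma block_is_Y:
  assumes btf: "btf_decomp M V V bs" and k: "k < length bs" and ok: "out \<in> snd (bs ! k)"
  shows "fst (bs ! k) = Yn \<and> snd (bs ! k) = CY"
proof -
  obtain i0 S0 where S0: "i0 \<in> I" "simple_path E i0 out S0" using path_exists by blast
  define mu where "mu = muS S0"
  have bij: "bij_betw mu V V" unfolding mu_def using mu_bij[OF S0] .
  have diag: "\<forall>r\<in>V. M r (mu r) \<noteq> None" unfolding mu_def using mu_diag[OF S0] .
  have inj: "inj_on mu V" using bij by (rule bij_betw_imp_inj_on)
  have mm: "\<And>l. l < length bs \<Longrightarrow> mu ` fst (bs ! l) = snd (bs ! l)"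
    using btf_matching[OF btf bij diag finV] by blast
  have rowsU: "(\<Union>l<length bs. fst (bs ! l)) = V" using btf_rows[OF btf] .
  have fiB: "fully_indecomposable M (fst (bs ! k)) (snd (bs ! k))" using btf_fi[OF btf k] .
  have FV: "fst (bs ! k) \<subseteq> V" using rowsU k by blast
  have i0V: "i0 \<in> V" using subsetD[OF IV S0(1)] .
  have mui0: "mu i0 = out" unfolding mu_def using mu_hd[OF S0] S_0[OF S0] by simp
  obtain r where r: "r \<in> fst (bs ! k)" "mu r = out" using ok mm[OF k] by (metis imageE)
  have "r = i0" using inj_onD[OF inj _ _ ] r mui0 FV i0V by (metis subsetD)
  then have i0k: "i0 \<in> fst (bs ! k)" using r by simp
  have i0Y: "i0 \<in> Yn" using S0 I_Yn by blast
  have DY: "(y, y') \<in> (Dg M mu V)\<^sup>*" if "y \<in> Yn" "y' \<in> Yn" for y y'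
  proof -
    have "(y, y') \<in> (Dg M mu Yn)\<^sup>*" unfolding mu_def using Y_sc[OF S0 that] .
    then show ?thesis using rtrancl_mono[OF Dg_mono[OF Yn_V]] by blast
  qed
  have sub1: "Yn \<subseteq> fst (bs ! k)"
  proof
    fix y assume y: "y \<in> Yn"
    then have "y \<in> V" using Yn_V by blast
    then obtain l where l: "l < length bs" "y \<in> fst (bs ! l)" using rowsU by blast
    have "k \<le> l" using btf_reach_mono[OF btf bij diag finV DY[OF i0Y y] k i0k l] .
    moreover have "l \<le> k" using btf_reach_mono[OF btf bij diag finV DY[OF y i0Y] l k i0k] .
    ultimately show "y \<in> fst (bs ! k)" using l by simp
  qed
  have clos: "x \<in> Yn" if "(x, i0) \<in> (Dg M mu V)\<^sup>*" for x
    using that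
  proof (induction rule: converse_rtrancl_induct)
    case base then show ?case using i0Y .
  next
    case (step x y)
    have xy: "x \<in> V" "y \<in> V" "M x (mu y) \<noteq> None" using step(1) unfolding Dg_def by auto
    have my: "mu y \<in> CY" using step(3) mu_img_Y[OF S0] unfolding mu_def by blast
    show ?case
    proof (rule ccontr)
      assume "x \<notin> Yn"
      then have "M x (mu y) = None" using zero_below[OF xy(1) _ my] by blast
      then show False using xy(3) by simp
    qed
  qed
  have sub2: "fst (bs ! k) \<subseteq> Yn"
  proof
    fix x assume x: "x \<in> fst (bs ! k)"
    have bk: "bij_betw mu (fst (bs ! k)) (snd (bs ! k))"
      unfolding bij_betw_def using inj_on_subset[OF inj FV] mm[OF k] by simp
    have "(x, i0) \<in> (Dg M mu (fst (bs ! k)))\<^sup>*"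
      using fi_strongly_connected[OF fiB bk _ x i0k] diag FV by blast
    then have "(x, i0) \<in> (Dg M mu V)\<^sup>*" using rtrancl_mono[OF Dg_mono[OF FV]] by blast
    then show "x \<in> Yn" using clos by blast
  qed
  have eq: "fst (bs ! k) = Yn" using sub1 sub2 by blast
  have "snd (bs ! k) = CY" using mm[OF k] eq mu_img_Y[OF S0] unfolding mu_def by simp
  then show ?thesis using eq by simp
qed

lemma perm_final: "perm_equiv M Yn CY (hmat Yn E I rho) Yn Yn"
proof -
  define tau where "tau c = (if c = out then rho else c)" for c
  have b1: "bij_betw id Yn Yn" by simp
  have inj: "inj_on tau CY"
  proof (rule inj_onI)
    fix x y assume "x \<in> CY" "y \<in> CY" "tau x = tau y"
    then show "x = y" unfolding tau_def CY_def using rho_notin_Hs by (auto split: if_splits)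
  qed
  have img: "tau ` CY = Yn"
  proof -
    have "tau ` CY = insert (tau out) (tau ` Hs)" unfolding CY_def by simp
    moreover have "tau ` Hs = Hs" unfolding tau_def using out_notin_Hs by (auto split: if_splits)
    ultimately show ?thesis unfolding Yn_def tau_def by simp
  qed
  have b2: "bij_betw tau CY Yn" unfolding bij_betw_def using inj img by simp
  have ent: "M r c = hmat Yn E I rho (id r) (tau c)" if r: "r \<in> Yn" and c: "c \<in> CY" for r c
  proof (cases "c = out")
    case True
    have "r \<in> V" using r Yn_V by blast
    then show ?thesis using True r outV unfolding hmat_def tau_def Yn_def by simp
  next
    case False
    then have cH: "c \<in> Hs" using c unfolding CY_def by simp
    have "r \<in> V" "c \<in> V" using r cH Yn_V Hs_V by auto
    moreover have "c \<noteq> rho" using cH rho_notin_Hs by blast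
    moreover have "c \<in> Yn" using cH unfolding Yn_def by simp
    ultimately show ?thesis using False r unfolding hmat_def tau_def by simp
  qed
  show ?thesis unfolding perm_equiv_def using b1 b2 ent by blast
qed

end


lemma vb_trans:
  assumes "distinct S" "visits_before S a b" "visits_before S b c"
  shows "visits_before S a c"
proof -
  obtain p q where pq: "p < q" "q < length S" "S ! p = a" "S ! q = b" using assms(2) unfolding visits_before_def by blast
  obtain q' r where qr: "q' < r" "r < length S" "S ! q' = b" "S ! r = c" using assms(3) unfolding visits_before_def by blast
  have "q = q'" using pq qr assms(1) nth_eq_iff_index_eq by (metis order.strict_trans)
  then show ?thesis unfolding visits_before_def using pq qr by (metis order.strict_trans)
qed

context net begin

lemma input_path: "i \<in> I \<Longrightarrow> \<exists>S. simple_path E i out S"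
proof -
  assume i: "i \<in> I"
  have iV: "i \<in> V" using subsetD[OF IV i] .
  have "(i, out) \<in> (Restr E V)\<^sup>*" using down[OF iV] RestrV by simp
  then show ?thesis using walk_to_path[of i out E V] iV by blast
qed

lemma reach_from_H:
  assumes "(x, w) \<in> E\<^sup>*" "x \<in> Hs" shows "w \<in> Hs \<or> (rho, w) \<in> E\<^sup>*"
  using assms(1)
proof (induction rule: rtrancl_induct)
  case base then show ?case using assms(2) by simp
next
  case (step y z)
  show ?case
  proof (cases "y \<in> Hs")
    case True
    show ?thesis
    proof (cases "z = rho")
      case True then show ?thesis by simp
    next
      case False
      have "z \<in> V" using step(2) EV by auto
      moreover have "y \<in> V" using True Hs_V by blast
      ultimately have "(y, z) \<in> (Restr E (V - {rho}))\<^sup>*" using step(2) False True rho_notin_Hs by blast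
      then show ?thesis using Hs_step[OF True] by blast
    qed
  next
    case False
    then have "(rho, y) \<in> E\<^sup>*" using step(3) by simp
    then show ?thesis using step(2) by (meson rtrancl.rtrancl_into_rtrancl)
  qed
qed

lemma notY_downstream:
  assumes v: "v \<in> V" "v \<notin> Yn" and i: "i \<in> I" shows "downstream E i v"
proof -
  obtain i0 where i0: "i0 \<in> I" "(i0, v) \<in> E\<^sup>*" using up[OF v(1)] by blast
  have rv: "(rho, v) \<in> E\<^sup>*"
  proof (cases "i0 = rho")
    case True then show ?thesis using i0 by simp
  next
    case False
    then have "i0 \<in> Hs" using I_Hs i0 by blast
    then show ?thesis using reach_from_H[OF i0(2)] v unfolding Yn_def by blast
  qed
  obtain S where S: "simple_path E i out S" using input_path[OF i] by blast
  have "rho \<in> set S" using rho_in_path[OF i S] .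
  then have "(i, rho) \<in> (Restr E (set S))\<^sup>*" using path_from_mem(2)[OF S] by blast
  then have "(i, rho) \<in> E\<^sup>*" using rtrancl_mono[of "Restr E (set S)" E] by blast
  then show ?thesis unfolding downstream_def using rv by (rule rtrancl_trans)
qed

lemma simple_notY:
  assumes v: "v \<notin> Yn" and i: "i \<in> I" and S: "simple_path E i out S" "v \<in> set S" and i': "i' \<in> I"
  shows "i_simple E out i' v"
proof -
  have ds: "distinct S" using S unfolding simple_path_def by simp
  have vr: "v \<noteq> rho" using v unfolding Yn_def by simp
  have r: "rho \<in> set S" using rho_in_path[OF i S(1)] .
  have "\<not> visits_before S v rho" using path_Yn[OF i S(1) S(2)] v by simp
  then have vb: "visits_before S rho v" using vb_total[OF ds S(2) r vr] by blast
  obtain ys us ws where sp: "S = ys @ rho # us @ v # ws" using vb_split[OF ds vb] .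
  have p2: "simple_path E rho out (rho # us @ v # ws)"
    using suffix_path[of E i out ys rho "us @ v # ws"] S(1) sp by simp
  obtain S' where S': "simple_path E i' out S'" using input_path[OF i'] by blast
  have r': "rho \<in> set S'" using rho_in_path[OF i' S'] .
  obtain ys' zs' where sp': "S' = ys' @ rho # zs'" using r' by (meson split_list)
  have p1: "simple_path E i' rho (ys' @ [rho])" using prefix_path[of E i' out ys' rho zs'] S' sp' by simp
  have ds': "distinct S'" using S' unfolding simple_path_def by simp
  have disj: "set (ys' @ [rho]) \<inter> set (rho # us @ v # ws) \<subseteq> {rho}"
  proof
    fix w assume w: "w \<in> set (ys' @ [rho]) \<inter> set (rho # us @ v # ws)"
    show "w \<in> {rho}"
    proof (rule ccontr)
      assume wr: "w \<notin> {rho}"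
      then have "w \<in> set ys'" using w by auto
      then obtain a1 a2 where "ys' = a1 @ w # a2" by (meson split_list)
      then have "visits_before S' w rho" using vb_intro[of S' a1 w a2 rho zs'] sp' ds' by simp
      then have wH: "w \<in> Hs" using before_rho[OF i' S'] by blast
      have "w \<in> set (us @ v # ws)" using w wr by auto
      then obtain b1 b2 where "us @ v # ws = b1 @ w # b2" by (meson split_list)
      then have "visits_before S rho w" using vb_intro[of S ys rho b1 w b2] sp ds by simp
      then have "w \<notin> Hs" using after_rho[OF i S(1)] by blast
      then show False using wH by simp
    qed
  qed
  have "simple_path E i' out ((ys' @ [rho]) @ tl (rho # us @ v # ws))" using path_concat[OF p1 p2 disj] .
  moreover have "v \<in> set ((ys' @ [rho]) @ tl (rho # us @ v # ws))" by simp
  ultimately show ?thesis unfolding i_simple_def by blast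
qed

lemma W_sub_Y: "W_nodes V E I out \<subseteq> Yn"
proof
  fix v assume vW: "v \<in> W_nodes V E I out"
  have vV: "v \<in> V" using vW unfolding W_nodes_def by simp
  show "v \<in> Yn"
  proof (rule ccontr)
    assume vY: "v \<notin> Yn"
    have vr: "v \<noteq> rho" using vY unfolding Yn_def by simp
    have vH: "v \<notin> Hs" using vY unfolding Yn_def by simp
    have dn: "\<And>i. i \<in> I \<Longrightarrow> downstream E i v" using notY_downstream[OF vV vY] .
    have absimp: "abs_simple E I out w" if a1: "\<not> abs_appendage E I out w" and a2: "w \<in> V" and a3: "w \<notin> Yn" for w
    proof -
      obtain i where i: "i \<in> I" "\<not> i_appendage E out i w" using a1 unfolding abs_appendage_def by blast
      then have "i_simple E out i w" using notY_downstream[OF a2 a3] unfolding i_appendage_def by blast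
      then obtain S where S: "simple_path E i out S" "w \<in> set S" unfolding i_simple_def by blast
      show ?thesis unfolding abs_simple_def using simple_notY[OF a3 i(1) S] by blast
    qed
    consider (c1) "v \<in> I" | (c2) "v = rho"
      | (c3) "\<exists>i\<in>I. \<exists>S. simple_path E i out S \<and> visits_before S i v \<and> visits_before S v rho"
      | (c4) "\<not> abs_appendage E I out v \<and> \<not> abs_simple E I out v"
      | (c5) "abs_appendage E I out v \<and> (\<exists>i\<in>I. \<exists>S. simple_path E i out S \<and>
            (\<exists>u. \<not> abs_appendage E I out u \<and> \<not> between_ss V E I out u \<and> cs_path_equiv V E S v u))"
      using vW unfolding W_nodes_def by blast
    then show False
    proof cases
      case c1 then show False using vY I_Yn by blast
    next
      case c2 then show False using vr by simp
    next
      case c3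
      then obtain i S where "i \<in> I" "simple_path E i out S" "visits_before S v rho" by blast
      then show False using before_rho vH by blast
    next
      case c4 then show False using absimp[OF _ vV vY] by blast
    next
      case c5
      then obtain i S u where S: "i \<in> I" "simple_path E i out S" and u: "\<not> abs_appendage E I out u"
        "\<not> between_ss V E I out u" "cs_path_equiv V E S v u" by blast
      define C where "C = V - set S"
      have cs: "v \<in> C" "u \<in> C" "(u, v) \<in> (Restr E C)\<^sup>*" "(v, u) \<in> (Restr E C)\<^sup>*"
        using u(3) unfolding cs_path_equiv_def C_def Let_def by auto
      have rS: "rho \<in> set S" using rho_in_path[OF S] .
      have CV: "C \<subseteq> V - {rho}" unfolding C_def using rS by blast
      have uV: "u \<in> V" using cs C_def by simp
      have uH: "u \<notin> Hs"
      proof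
        assume "u \<in> Hs"
        moreover have "(u, v) \<in> (Restr E (V - {rho}))\<^sup>*" using rtrancl_mono_set[OF cs(3) CV] .
        ultimately show False using Hs_step vH by blast
      qed
      have ur: "u \<noteq> rho" using cs(2) rS unfolding C_def by blast
      have uY: "u \<notin> Yn" using uH ur unfolding Yn_def by simp
      have uS: "abs_simple E I out u" using absimp[OF u(1) uV uY] .
      obtain i' where i': "i' \<in> I" using I_ne by blast
      obtain Su where Su: "simple_path E i' out Su" "u \<in> set Su" using uS i' unfolding abs_simple_def i_simple_def by blast
      have dSu: "distinct Su" using Su unfolding simple_path_def by simp
      have uns: "\<not> ss u" using ss_in_path[OF _ S(1) S(2)] cs(2) unfolding C_def by blast
      obtain pu where pu: "pu < length Su" "Su ! pu = u" using Su(2) by (meson in_set_conv_nth)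
      obtain pr where pr: "pr < length Su" "Su ! pr = rho" using rho_in_path[OF i' Su(1)] by (meson in_set_conv_nth)
      have "\<not> visits_before Su u rho" using path_Yn[OF i' Su] uY by simp
      then have "visits_before Su rho u" using vb_total[OF dSu Su(2) rho_in_path[OF i' Su(1)] ur] by blast
      then have prpu: "pr < pu" using vb_nth[OF dSu pr(1) pu(1)] pr pu by simp
      have lS: "length Su - 1 < length Su" using pu by simp
      have lastS: "Su ! (length Su - 1) = out" using Su(1) unfolding simple_path_def by (metis last_conv_nth)
      have uo: "u \<noteq> out" using cs(2) path_last[OF S(2)] unfolding C_def by blast
      have pul: "pu < length Su - 1" using pu lastS uo by (metis Suc_pred' less_Suc_eq less_nat_zero_code nat_neq_iff)
      define PA where "PA = {p. p < pu \<and> ss (Su ! p)}"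
      define PB where "PB = {q. pu < q \<and> q < length Su \<and> ss (Su ! q)}"
      have PAne: "pr \<in> PA" unfolding PA_def using prpu pr rho_ss by simp
      have PBne: "length Su - 1 \<in> PB" unfolding PB_def using pul lastS ss_out by simp
      have finPA: "finite PA" unfolding PA_def by simp
      define pa where "pa = Max PA"
      define pb where "pb = Min PB"
      have paPA: "pa \<in> PA" unfolding pa_def using Max_in[OF finPA] PAne by blast
      have finPB: "finite PB" by (rule finite_subset[of _ "{..<length Su}"]) (auto simp: PB_def)
      have pbPB: "pb \<in> PB" unfolding pb_def using Min_in[OF finPB] PBne by blast
      have pa: "pa < pu" "ss (Su ! pa)" using paPA unfolding PA_def by auto
      have pb: "pu < pb" "pb < length Su" "ss (Su ! pb)" using pbPB unfolding PB_def by auto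
      define a where "a = Su ! pa"
      define b where "b = Su ! pb"
      have pal: "pa < length Su" using pa pu by simp
      have vau: "visits_before Su a u" unfolding a_def using vb_nth[OF dSu pal pu(1)] pa pu by simp
      have vub: "visits_before Su u b" unfolding b_def using vb_nth[OF dSu pu(1) pb(2)] pb pu by simp
      have vab: "visits_before Su a b" using vb_trans[OF dSu vau vub] .
      have sga: "ss_greater E I out a b" unfolding ss_greater_def
        using ss_consistent[OF pa(2)[folded a_def] pb(3)[folded b_def] i' Su(1) _ _ vab] by blast
      have nomid: "\<not> (\<exists>r. ss r \<and> ss_greater E I out a r \<and> ss_greater E I out r b)"
      proof
        assume "\<exists>r. ss r \<and> ss_greater E I out a r \<and> ss_greater E I out r b"
        then obtain r where r: "ss r" "visits_before Su a r" "visits_before Su r b"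
          using i' Su(1) unfolding ss_greater_def by blast
        obtain q where q: "q < length Su" "Su ! q = r" using r(2) vb_mem by (meson in_set_conv_nth)
        have "pa < q" using vb_nth[OF dSu pal q(1)] r(2) q unfolding a_def by simp
        moreover have "q < pb" using vb_nth[OF dSu q(1) pb(2)] r(3) q unfolding b_def by simp
        moreover have "q \<noteq> pu" using q pu r(1) uns by auto
        ultimately show False
        proof -
          assume h: "pa < q" "q < pb" "q \<noteq> pu"
          show False
          proof (cases "q < pu")
            case True
            then have "q \<in> PA" unfolding PA_def using q r(1) by simp
            then have "q \<le> pa" unfolding pa_def using Max_ge[OF finPA] by blast
            then show False using h by simp
          next
            case False
            then have "q \<in> PB" unfolding PB_def using q r(1) h by simp
            then have "pb \<le> q" unfolding pb_def using Min_le[OF finPB] by blast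
            then show False using h by simp
          qed
        qed
      qed
      have "adjacent_ss V E I out a b" unfolding adjacent_ss_def
        using pa(2) pb(3) sga nomid unfolding a_def b_def by blast
      then have "between_ss V E I out u" unfolding between_ss_def using uS i' Su(1) vau vub by blast
      then show False using u(2) by simp
    qed
  qed
qed

end


lemma restr_start: "(a, b) \<in> (Restr R X)\<^sup>* \<Longrightarrow> a \<noteq> b \<Longrightarrow> a \<in> X"
  by (erule converse_rtranclE) auto

lemma restr_end: "(a, b) \<in> (Restr R X)\<^sup>* \<Longrightarrow> a \<noteq> b \<Longrightarrow> b \<in> X"
  by (erule rtranclE) auto

context net begin

lemma cond:
  assumes S: "i \<in> I" "simple_path E i out S" and C: "C = V - set S"
    and x0: "x0 \<in> C" and w: "(x0, v) \<in> (Restr E C)\<^sup>*" and vC: "v \<in> C"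
  shows "\<exists>u. u \<in> C \<and> (u, v) \<in> (Restr E C)\<^sup>* \<and> (v, u) \<in> (Restr E C)\<^sup>* \<and>
           (\<exists>P. simple_path E x0 out P \<and> u \<in> set P)"
proof -
  define EC where "EC = Restr E C"
  define K where "K = {x \<in> C. (x, v) \<in> EC\<^sup>* \<and> (v, x) \<in> EC\<^sup>*}"
  define Up where "Up = {x \<in> C. (x, v) \<in> EC\<^sup>*} - K"
  define Dn where "Dn = {x \<in> C. (v, x) \<in> EC\<^sup>*} - K"
  define Zs where "Zs = K \<union> Dn \<union> set S"
  have vK: "v \<in> K" unfolding K_def using vC by simp
  have UpDn: "Up \<inter> Dn = {}" unfolding Up_def Dn_def K_def by blast
  have step1: "\<exists>u\<in>K. (x, u) \<in> (Restr E (Up \<union> {u}))\<^sup>*" if "(x, v) \<in> EC\<^sup>*" "x \<in> C" for x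
    using that
  proof (induction rule: converse_rtrancl_induct)
    case base then show ?case using vK by blast
  next
    case (step x y)
    have xy: "(x, y) \<in> E" "x \<in> C" "y \<in> C" using step(1) unfolding EC_def by auto
    show ?case
    proof (cases "x \<in> K")
      case True then show ?thesis by blast
    next
      case False
      have xv: "(x, v) \<in> EC\<^sup>*" using step(1,2) by (meson converse_rtrancl_into_rtrancl)
      then have xUp: "x \<in> Up" unfolding Up_def using False xy by blast
      obtain u where u: "u \<in> K" "(y, u) \<in> (Restr E (Up \<union> {u}))\<^sup>*" using step(3) xy by blast
      have "y \<in> Up \<union> {u}"
      proof (cases "y = u")
        case True then show ?thesis by simp
      next
        case False then show ?thesis using restr_start[OF u(2)] by blast
      qed
      then have "(x, y) \<in> Restr E (Up \<union> {u})" using xy xUp by blast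
      then have "(x, u) \<in> (Restr E (Up \<union> {u}))\<^sup>*" using u(2) by (rule converse_rtrancl_into_rtrancl)
      then show ?thesis using u(1) by blast
    qed
  qed
  obtain u where u: "u \<in> K" "(x0, u) \<in> (Restr E (Up \<union> {u}))\<^sup>*" using step1[OF w[folded EC_def] x0] by blast
  have uC: "u \<in> C" using u K_def by simp
  have uv: "(u, v) \<in> EC\<^sup>*" "(v, u) \<in> EC\<^sup>*" using u unfolding K_def by auto
  have uvK: "(u, v) \<in> (Restr E K)\<^sup>*"
  proof -
    have h: "(u, v) \<in> (EC \<inter> {x. (u,x) \<in> EC\<^sup>* \<and> (x,u) \<in> EC\<^sup>*} \<times> {x. (u,x) \<in> EC\<^sup>* \<and> (x,u) \<in> EC\<^sup>*})\<^sup>*"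
      using rtrancl_inside_scc[OF uv] .
    have sb: "EC \<inter> {x. (u,x) \<in> EC\<^sup>* \<and> (x,u) \<in> EC\<^sup>*} \<times> {x. (u,x) \<in> EC\<^sup>* \<and> (x,u) \<in> EC\<^sup>*} \<subseteq> Restr E K"
    proof
      fix p assume p: "p \<in> EC \<inter> {x. (u,x) \<in> EC\<^sup>* \<and> (x,u) \<in> EC\<^sup>*} \<times> {x. (u,x) \<in> EC\<^sup>* \<and> (x,u) \<in> EC\<^sup>*}"
      obtain a b where ab: "p = (a, b)" by (cases p)
      have a: "(a, b) \<in> E" "a \<in> C" "b \<in> C" using p ab unfolding EC_def by auto
      have r: "(u, a) \<in> EC\<^sup>*" "(a, u) \<in> EC\<^sup>*" "(u, b) \<in> EC\<^sup>*" "(b, u) \<in> EC\<^sup>*" using p ab by auto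
      have "(a, v) \<in> EC\<^sup>*" "(v, a) \<in> EC\<^sup>*" "(b, v) \<in> EC\<^sup>*" "(v, b) \<in> EC\<^sup>*"
        using rtrancl_trans[OF r(2) uv(1)] rtrancl_trans[OF uv(2) r(1)]
              rtrancl_trans[OF r(4) uv(1)] rtrancl_trans[OF uv(2) r(3)] by auto
      then have "a \<in> K" "b \<in> K" unfolding K_def using a by auto
      then show "p \<in> Restr E K" using ab a by simp
    qed
    show ?thesis using rtrancl_mono[OF sb] h by blast
  qed
  have step2: "(x, out) \<in> (Restr E Zs)\<^sup>*" if "(x, out) \<in> E\<^sup>*" "x \<in> K \<union> Dn" for x
    using that
  proof (induction rule: converse_rtrancl_induct)
    case base then show ?case by simp
  next
    case (step x y)
    have xZ: "x \<in> Zs" using step(4) unfolding Zs_def by blast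
    have xC: "x \<in> C" "(v, x) \<in> EC\<^sup>*" using step(4) unfolding K_def Dn_def by auto
    show ?case
    proof (cases "y \<in> set S")
      case True
      have "(y, out) \<in> (Restr E (set S))\<^sup>*" using path_from_mem(1)[OF S(2) True] .
      moreover have "set S \<subseteq> Zs" unfolding Zs_def by blast
      ultimately have yo: "(y, out) \<in> (Restr E Zs)\<^sup>*" by (rule rtrancl_mono_set)
      have "y \<in> Zs" using True unfolding Zs_def by blast
      then have "(x, y) \<in> Restr E Zs" using step(1) xZ by blast
      then show ?thesis using yo by (rule converse_rtrancl_into_rtrancl)
    next
      case False
      have yC: "y \<in> C" using False step(1) EV C by auto
      have "(x, y) \<in> EC" using step(1) xC yC unfolding EC_def by blast
      then have vy: "(v, y) \<in> EC\<^sup>*" using rtrancl_into_rtrancl[OF xC(2)] by blast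
      have yKD: "y \<in> K \<union> Dn" unfolding K_def Dn_def using yC vy by blast
      have yZ: "y \<in> Zs" using yKD unfolding Zs_def by blast
      have "(x, y) \<in> Restr E Zs" using step(1) xZ yZ by blast
      then show ?thesis using step(3)[OF yKD] by (rule converse_rtrancl_into_rtrancl)
    qed
  qed
  have vV: "v \<in> V" using vC C by simp
  have vo: "(v, out) \<in> (Restr E Zs)\<^sup>*" using step2[OF down[OF vV]] vK by blast
  have KZ: "K \<subseteq> Zs" unfolding Zs_def by blast
  have uo: "(u, out) \<in> (Restr E Zs)\<^sup>*" using rtrancl_trans[OF rtrancl_mono_set[OF uvK KZ] vo] .
  have uZ: "u \<in> Zs" using u(1) KZ by blast
  obtain P2 where P2: "simple_path E u out P2" "set P2 \<subseteq> Zs" using walk_to_path[OF uo uZ] by blast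
  have x0U: "x0 \<in> Up \<union> {u}"
  proof (cases "x0 = u")
    case True then show ?thesis by simp
  next
    case False then show ?thesis using restr_start[OF u(2)] by blast
  qed
  obtain P1 where P1: "simple_path E x0 u P1" "set P1 \<subseteq> Up \<union> {u}" using walk_to_path[OF u(2) x0U] by blast
  have UpZ: "Up \<inter> Zs = {}"
  proof -
    have "Up \<inter> K = {}" unfolding Up_def by blast
    moreover have "Up \<inter> set S = {}" unfolding Up_def using C by blast
    ultimately show ?thesis unfolding Zs_def using UpDn by blast
  qed
  have disj: "set P1 \<inter> set P2 \<subseteq> {u}" using P1(2) P2(2) UpZ by blast
  have "simple_path E x0 out (P1 @ tl P2)" using path_concat[OF P1(1) P2(1) disj] .
  moreover have "u \<in> set (P1 @ tl P2)" using P1(1) unfolding simple_path_def by auto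
  ultimately show ?thesis using uC uv unfolding EC_def by blast
qed

end


definition detr :: "('a \<times> 'a) set \<Rightarrow> bool" where
  "detr F \<longleftrightarrow> (\<forall>a b b'. (a, b) \<in> F \<longrightarrow> (a, b') \<in> F \<longrightarrow> b = b')"

lemma det_conf:
  assumes d: "detr F" and ab: "(a, b) \<in> F\<^sup>*" and ac: "(a, c) \<in> F\<^sup>*"
  shows "(b, c) \<in> F\<^sup>* \<or> (c, b) \<in> F\<^sup>*"
  using ab
proof (induction rule: rtrancl_induct)
  case base then show ?case using ac by simp
next
  case (step y z)
  show ?case
  proof (cases "(c, y) \<in> F\<^sup>*")
    case True then show ?thesis using step(2) by (meson rtrancl.rtrancl_into_rtrancl)
  next
    case False
    then have yc: "(y, c) \<in> F\<^sup>*" using step(3) by blast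
    show ?thesis
    proof (cases "y = c")
      case True then show ?thesis using step(2) False by simp
    next
      case False
      then have "(y, c) \<in> F\<^sup>+" using yc by (simp add: rtrancl_eq_or_trancl)
      then obtain w where w: "(y, w) \<in> F" "(w, c) \<in> F\<^sup>*" by (meson tranclD)
      have "w = z" using d w(1) step(2) unfolding detr_def by blast
      then show ?thesis using w(2) by simp
    qed
  qed
qed

lemma det_source:
  assumes d: "detr F" and fin: "finite {a. (a, c) \<in> F\<^sup>*}" and nc: "\<forall>b. (c, b) \<notin> F"
  shows "\<exists>s. (s, c) \<in> F\<^sup>* \<and> (\<forall>a. (a, s) \<notin> F)"
proof (rule ccontr)
  assume H: "\<not> (\<exists>s. (s, c) \<in> F\<^sup>* \<and> (\<forall>a. (a, s) \<notin> F))"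
  define A where "A = {a. (a, c) \<in> F\<^sup>*}"
  define q where "q s = (SOME a. (a, s) \<in> F)" for s
  have qF: "(q s, s) \<in> F" if "s \<in> A" for s
  proof -
    have "\<exists>a. (a, s) \<in> F" using H that unfolding A_def by blast
    then show ?thesis unfolding q_def by (rule someI_ex)
  qed
  have qA: "q ` A \<subseteq> A"
  proof
    fix x assume "x \<in> q ` A"
    then obtain s where s: "s \<in> A" "x = q s" by blast
    have "(q s, s) \<in> F" using qF s(1) .
    then have "(q s, c) \<in> F\<^sup>*" using s(1) unfolding A_def by (meson converse_rtrancl_into_rtrancl mem_Collect_eq)
    then show "x \<in> A" using s unfolding A_def by simp
  qed
  have qi: "inj_on q A"
  proof (rule inj_onI)
    fix s s' assume "s \<in> A" "s' \<in> A" "q s = q s'"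
    then show "s = s'" using qF d unfolding detr_def by metis
  qed
  have "q ` A = A" using endo_inj_surj[OF fin[folded A_def] qA qi] .
  moreover have "c \<in> A" unfolding A_def by simp
  ultimately obtain s where "s \<in> A" "q s = c" by (metis imageE)
  then show False using qF nc by metis
qed

context net begin

definition colnode :: "'v \<Rightarrow> 'v option" where "colnode c = (if c = out then None else Some c)"

lemma disjoint_paths:
  assumes vH: "v \<in> Hs" and vns: "\<forall>i\<in>I. \<not> i_simple E out i v"
  shows "\<exists>ia ib Z1 Z2. ia \<in> I \<and> ib \<in> I \<and> Z1 \<subseteq> Yn \<and> Z2 \<subseteq> Yn \<and> Z1 \<inter> Z2 = {} \<and>
           ia \<in> Z1 \<and> ib \<in> Z2 \<and> (ia, rho) \<in> (Restr E Z1)\<^sup>* \<and> (ib, v) \<in> (Restr E Z2)\<^sup>*"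
proof -
  obtain i0 S0 where S0: "i0 \<in> I" "simple_path E i0 out S0" using path_exists by blast
  define mu where "mu = muS S0"
  have vS0: "v \<notin> set S0" using vns S0 unfolding i_simple_def by blast
  have muv: "mu v = v" unfolding mu_def using mu_notin[OF S0 vS0] .
  have vY: "v \<in> Yn" using vH unfolding Yn_def by simp
  have i0Y: "i0 \<in> Yn" using S0(1) I_Yn by blast
  have vi0: "v \<noteq> i0" using vS0 path_hd[OF S0(2)] by blast
  have muinj: "inj_on mu V" unfolding mu_def using mu_inj[OF S0] .
  have muY: "mu ` Yn = CY" unfolding mu_def using mu_img_Y[OF S0] .
  have mudiag: "\<forall>r\<in>V. M r (mu r) \<noteq> None" unfolding mu_def using mu_diag[OF S0] .
  define D where "D = Dg M mu Yn"
  have DY: "D \<subseteq> Yn \<times> Yn" unfolding D_def Dg_def by auto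
  have "(v, i0) \<in> D\<^sup>*" unfolding D_def mu_def using Y_sc[OF S0 vY i0Y] .
  moreover have "Restr D Yn = D" using DY by blast
  ultimately have vi: "(v, i0) \<in> (Restr D Yn)\<^sup>*" by simp
  obtain xs where xs: "simple_path D v i0 xs" "set xs \<subseteq> Yn" using walk_to_path[OF vi vY] by blast
  have xd: "distinct xs" and xne: "xs \<noteq> []" and xh: "hd xs = v" and xl: "last xs = i0"
    and xsucc: "successively (\<lambda>x y. (x, y) \<in> D) xs" using xs(1) unfolding simple_path_def by auto
  define nx where "nx = map_of (zip (butlast xs) (tl xs))"
  define sg where "sg x = (case nx x of Some y \<Rightarrow> y | None \<Rightarrow> x)" for x
  define Dom where "Dom = Yn - {i0}"
  have x0: "xs ! 0 = v" using xh xne by (simp add: hd_conv_nth)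
  have xL: "xs ! (length xs - 1) = i0" using xl xne by (simp add: last_conv_nth)
  have nx_nth: "nx (xs ! j) = Some (xs ! Suc j)" if j: "Suc j < length xs" for j
  proof -
    have l: "length (butlast xs) = length (tl xs)" by simp
    have d: "distinct (butlast xs)" using xd by (simp add: distinct_butlast)
    have jl: "j < length (tl xs)" using j by simp
    have "nx (butlast xs ! j) = Some (tl xs ! j)" unfolding nx_def using map_of_zip_nth[OF l d jl] .
    moreover have "butlast xs ! j = xs ! j" using j by (simp add: nth_butlast)
    moreover have "tl xs ! j = xs ! Suc j" using j by (simp add: nth_tl)
    ultimately show ?thesis by simp
  qed
  have nx_none: "nx x = None" if "x \<notin> set xs" for x
  proof -
    have "x \<notin> set (butlast xs)" using that in_set_butlastD by fastforce
    then show ?thesis unfolding nx_def by simp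
  qed
  have dom_cases: "(x \<notin> set xs \<and> sg x = x) \<or> (\<exists>j. Suc j < length xs \<and> x = xs ! j \<and> sg x = xs ! Suc j)"
    if x: "x \<in> Dom" for x
  proof (cases "x \<in> set xs")
    case False then show ?thesis unfolding sg_def using nx_none by simp
  next
    case True
    then obtain j where j: "j < length xs" "xs ! j = x" by (meson in_set_conv_nth)
    have "j \<noteq> length xs - 1" using j xL x unfolding Dom_def by auto
    then have "Suc j < length xs" using j by simp
    then show ?thesis unfolding sg_def using nx_nth j by auto
  qed
  have xsV: "set xs \<subseteq> V" using xs(2) Yn_V by blast
  have s1: "sg x \<in> Yn - {v}" if x: "x \<in> Dom" for x
  proof (cases "x \<notin> set xs \<and> sg x = x")
    case True
    then have "x \<noteq> v" using xh xne by auto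
    then show ?thesis using True x unfolding Dom_def by simp
  next
    case False
    then obtain j where j: "Suc j < length xs" "x = xs ! j" "sg x = xs ! Suc j" using dom_cases[OF x] by blast
    have "xs ! Suc j \<noteq> xs ! 0" using nth_eq_iff_index_eq[OF xd j(1), of 0] j xne by simp
    moreover have "xs ! Suc j \<in> Yn" using xs(2) j(1) by (meson nth_mem subsetD)
    ultimately show ?thesis using j x0 by simp
  qed
  have s2: "inj_on sg Dom"
  proof (rule inj_onI)
    fix x y assume x: "x \<in> Dom" and y: "y \<in> Dom" and e: "sg x = sg y"
    show "x = y"
    proof (cases "x \<notin> set xs \<and> sg x = x")
      case xT: True
      show ?thesis
      proof (cases "y \<notin> set xs \<and> sg y = y")
        case True then show ?thesis using xT e by simp
      next
        case False
        then obtain k where k: "Suc k < length xs" "y = xs ! k" "sg y = xs ! Suc k" using dom_cases[OF y] by blast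
        have "sg y \<in> set xs" using k by simp
        then show ?thesis using xT e by simp
      qed
    next
      case xF: False
      then obtain j where j: "Suc j < length xs" "x = xs ! j" "sg x = xs ! Suc j" using dom_cases[OF x] by blast
      show ?thesis
      proof (cases "y \<notin> set xs \<and> sg y = y")
        case True
        have "sg x \<in> set xs" using j by simp
        then show ?thesis using True e by simp
      next
        case False
        then obtain k where k: "Suc k < length xs" "y = xs ! k" "sg y = xs ! Suc k" using dom_cases[OF y] by blast
        have "xs ! Suc j = xs ! Suc k" using j k e by simp
        then have "j = k" using nth_eq_iff_index_eq[OF xd j(1) k(1)] by simp
        then show ?thesis using j k by simp
      qed
    qed
  qed
  have s3: "M x (mu (sg x)) \<noteq> None" if x: "x \<in> Dom" for x
  proof (cases "x \<notin> set xs \<and> sg x = x")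
    case True
    have "x \<in> V" using x Yn_V unfolding Dom_def by blast
    then show ?thesis using mudiag True by simp
  next
    case False
    then obtain j where j: "Suc j < length xs" "x = xs ! j" "sg x = xs ! Suc j" using dom_cases[OF x] by blast
    have "(xs ! j, xs ! Suc j) \<in> D" using successively_nth[OF xsucc j(1)] .
    then show ?thesis using j unfolding D_def Dg_def by simp
  qed
  define p where "p x = mu (sg x)" for x
  have p1: "p x \<in> CY - {v}" if x: "x \<in> Dom" for x
  proof -
    have sY: "sg x \<in> Yn" "sg x \<noteq> v" using s1[OF x] by auto
    have "p x \<in> CY" unfolding p_def using sY muY by blast
    moreover have "p x \<noteq> v"
    proof
      assume "p x = v"
      then have "mu (sg x) = mu v" unfolding p_def using muv by simp
      then have "sg x = v" using inj_onD[OF muinj] sY Yn_V vY by blast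
      then show False using sY by simp
    qed
    ultimately show ?thesis by simp
  qed
  have p2: "inj_on p Dom"
  proof (rule inj_onI)
    fix x y assume x: "x \<in> Dom" and y: "y \<in> Dom" and e: "p x = p y"
    have "sg x \<in> V" "sg y \<in> V" using s1 x y Yn_V by blast+
    then have "sg x = sg y" using e inj_onD[OF muinj] unfolding p_def by blast
    then show "x = y" using inj_onD[OF s2] x y by blast
  qed
  have cinj: "c = c'" if "c \<in> CY" "c' \<in> CY" "colnode c = colnode c'" for c c'
    using that unfolding colnode_def by (auto split: if_splits)
  define F where "F = {(colnode (p x), Some x) | x. x \<in> Dom}"
  have F0: "\<exists>x\<in>Dom. a = colnode (p x) \<and> b = Some x" if "(a, b) \<in> F" for a b
    using that unfolding F_def by blast
  have F1: "(colnode (p x), Some x) \<in> F" if "x \<in> Dom" for x using that unfolding F_def by blast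
  have det: "detr F" unfolding detr_def
  proof (intro allI impI)
    fix a b b' assume "(a, b) \<in> F" "(a, b') \<in> F"
    then obtain x x' where xx: "x \<in> Dom" "a = colnode (p x)" "b = Some x" "x' \<in> Dom" "a = colnode (p x')" "b' = Some x'"
      using F0 by metis
    have "p x = p x'" using cinj p1 xx by blast
    then have "x = x'" using inj_onD[OF p2] xx by blast
    then show "b = b'" using xx by simp
  qed
  have vo: "v \<noteq> out" using vH out_notin_Hs by blast
  have F3: "(Some v, b) \<notin> F" for b
  proof
    assume "(Some v, b) \<in> F"
    then obtain x where x: "x \<in> Dom" "Some v = colnode (p x)" using F0 by blast
    then have "p x = v" unfolding colnode_def by (auto split: if_splits)
    then show False using p1[OF x(1)] by simp
  qed
  have F4: "(Some rho, b) \<notin> F" for b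
  proof
    assume "(Some rho, b) \<in> F"
    then obtain x where x: "x \<in> Dom" "Some rho = colnode (p x)" using F0 by blast
    then have "p x = rho" "p x \<noteq> out" unfolding colnode_def by (auto split: if_splits)
    then show False using p1[OF x(1)] rho_notin_Hs unfolding CY_def by auto
  qed
  have F5: "x \<in> I" if nn: "(None, Some x) \<in> F" for x
  proof -
    obtain y where y: "y \<in> Dom" "None = colnode (p y)" "Some x = Some y" using F0[OF nn] by blast
    have "p y = out" using y(2) unfolding colnode_def by (auto split: if_splits)
    moreover have "y \<in> V" using y(1) Yn_V unfolding Dom_def by blast
    ultimately show ?thesis using s3[OF y(1)] hm_out y(3) unfolding p_def by auto
  qed
  have F6: "a = b \<or> (a, b) \<in> E" if nn: "(Some a, Some b) \<in> F" for a b
  proof -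
    obtain y where y: "y \<in> Dom" "Some a = colnode (p y)" "Some b = Some y" using F0[OF nn] by blast
    have ao: "p y = a" "a \<noteq> out" using y(2) unfolding colnode_def by (auto split: if_splits)
    have bV: "b \<in> V" using y Yn_V unfolding Dom_def by auto
    have aV: "a \<in> V" using p1[OF y(1)] ao CY_V by auto
    have "M b a \<noteq> None" using s3[OF y(1)] ao y(3) unfolding p_def by simp
    then show ?thesis using hm_col[OF bV aV ao(2)] by auto
  qed
  have F7: "\<exists>x. b = Some x \<and> x \<in> Dom" if "(a, b) \<in> F" for a b using F0[OF that] by blast
  define A where "A t = {a. (a, Some t) \<in> F\<^sup>*}" for t
  have Asub: "A t \<subseteq> insert None (Some ` V)" if "t \<in> V" for t
  proof
    fix a assume a: "a \<in> A t"
    then have "(a, Some t) \<in> F\<^sup>*" unfolding A_def by simp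
    then show "a \<in> insert None (Some ` V)"
    proof (cases rule: converse_rtranclE)
      case base then show ?thesis using that by simp
    next
      case (step c)
      then obtain x where x: "x \<in> Dom" "a = colnode (p x)" using F0 by blast
      have "p x \<in> V" using p1[OF x(1)] CY_V by blast
      then show ?thesis using x unfolding colnode_def by auto
    qed
  qed
  have finA: "finite (A t)" if "t \<in> V" for t
    using finite_subset[OF Asub[OF that]] finV by simp
  have srcY: "x \<in> Yn" if "Some x \<in> A t" "t \<in> Yn" for x t
  proof -
    have "(Some x, Some t) \<in> F\<^sup>*" using that unfolding A_def by simp
    then show ?thesis
    proof (cases rule: converse_rtranclE)
      case base then show ?thesis using that by simp
    next
      case (step c)
      then obtain y where y: "y \<in> Dom" "Some x = colnode (p y)" using F0 by blast
      have "p y = x" "x \<noteq> out" using y(2) unfolding colnode_def by (auto split: if_splits)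
      then show ?thesis using p1[OF y(1)] unfolding CY_def Yn_def by auto
    qed
  qed
  have source: "\<exists>s\<in>A t. (s = None \<or> s = Some i0)" if t: "t \<in> Yn" "\<forall>b. (Some t, b) \<notin> F" for t
  proof -
    have tV: "t \<in> V" using t Yn_V by blast
    obtain s where s: "(s, Some t) \<in> F\<^sup>*" "\<forall>a. (a, s) \<notin> F"
      using det_source[OF det finA[OF tV, unfolded A_def] t(2)] by blast
    have sA: "s \<in> A t" unfolding A_def using s(1) by simp
    have "s = None \<or> s = Some i0"
    proof (cases s)
      case None then show ?thesis by simp
    next
      case (Some x)
      have "x \<in> Yn" using srcY sA Some t(1) by blast
      show ?thesis
      proof (rule ccontr)
        assume "\<not> (s = None \<or> s = Some i0)"
        then have "x \<in> Dom" using \<open>x \<in> Yn\<close> Some unfolding Dom_def by simp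
        then show False using F1 s(2) Some by blast
      qed
    qed
    then show ?thesis using sA by blast
  qed
  have toE: "(a, t) \<in> (Restr E {x. Some x \<in> A t})\<^sup>*" if tt: "(Some a, Some t) \<in> F\<^sup>*" for a t
  proof -
    have "\<forall>a. w = Some a \<longrightarrow> (a, t) \<in> (Restr E {x. Some x \<in> A t})\<^sup>*" if "(w, Some t) \<in> F\<^sup>*" for w
      using that
    proof (induction rule: converse_rtrancl_induct)
      case base then show ?case by simp
    next
      case (step w w')
      show ?case
      proof (intro allI impI)
        fix a assume wa: "w = Some a"
        obtain b where b: "w' = Some b" using F7[OF step(1)] by blast
        have IH: "(b, t) \<in> (Restr E {x. Some x \<in> A t})\<^sup>*" using step(3) b by blast
        have inA: "Some a \<in> A t" "Some b \<in> A t" unfolding A_def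
          using step(1,2) wa b by (auto intro: converse_rtrancl_into_rtrancl)
        have "a = b \<or> (a, b) \<in> E" using F6 step(1) wa b by blast
        then show "(a, t) \<in> (Restr E {x. Some x \<in> A t})\<^sup>*"
        proof
          assume "a = b" then show ?thesis using IH by simp
        next
          assume "(a, b) \<in> E"
          then have "(a, b) \<in> Restr E {x. Some x \<in> A t}" using inA by simp
          then show ?thesis using IH by (rule converse_rtrancl_into_rtrancl)
        qed
      qed
    qed
    then show ?thesis using tt by blast
  qed
  have fromNone: "\<exists>x\<in>I. Some x \<in> A t \<and> (x, t) \<in> (Restr E {x. Some x \<in> A t})\<^sup>*"
    if "None \<in> A t" for t
  proof -
    have "(None, Some t) \<in> F\<^sup>*" using that unfolding A_def by simp
    then show ?thesis
    proof (cases rule: converse_rtranclE)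
      case base then show ?thesis by simp
    next
      case (step w)
      obtain x where x: "w = Some x" using F7[OF step(1)] by blast
      have "x \<in> I" using F5 step(1) x by simp
      moreover have "Some x \<in> A t" unfolding A_def using step(2) x by simp
      moreover have "(x, t) \<in> (Restr E {x. Some x \<in> A t})\<^sup>*" using toE step(2) x by simp
      ultimately show ?thesis by blast
    qed
  qed
  have disjA: "A v \<inter> A rho = {}"
  proof (rule ccontr)
    assume "A v \<inter> A rho \<noteq> {}"
    then obtain a where "(a, Some v) \<in> F\<^sup>*" "(a, Some rho) \<in> F\<^sup>*" unfolding A_def by blast
    then have c: "(Some v, Some rho) \<in> F\<^sup>* \<or> (Some rho, Some v) \<in> F\<^sup>*" using det_conf[OF det] by blast
    have vr: "v \<noteq> rho" using vH rho_notin_Hs by blast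
    show False
    proof (rule disjE[OF c])
      assume "(Some v, Some rho) \<in> F\<^sup>*"
      then have "(Some v, Some rho) \<in> F\<^sup>+" using vr by (simp add: rtrancl_eq_or_trancl)
      then obtain w where "(Some v, w) \<in> F" by (meson tranclD)
      then show False using F3 by blast
    next
      assume "(Some rho, Some v) \<in> F\<^sup>*"
      then have "(Some rho, Some v) \<in> F\<^sup>+" using vr by (simp add: rtrancl_eq_or_trancl)
      then obtain w where "(Some rho, w) \<in> F" by (meson tranclD)
      then show False using F4 by blast
    qed
  qed
  have rY: "rho \<in> Yn" unfolding Yn_def by simp
  obtain sv where sv: "sv \<in> A v" "sv = None \<or> sv = Some i0" using source[OF vY] F3 by blast
  obtain sr where sr: "sr \<in> A rho" "sr = None \<or> sr = Some i0" using source[OF rY] F4 by blast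
  have svsr: "sv \<noteq> sr" using sv(1) sr(1) disjA by blast
  define Z1 where "Z1 = {x. Some x \<in> A rho}"
  define Z2 where "Z2 = {x. Some x \<in> A v}"
  have Z1Y: "Z1 \<subseteq> Yn" unfolding Z1_def using srcY rY by blast
  have Z2Y: "Z2 \<subseteq> Yn" unfolding Z2_def using srcY vY by blast
  have Zd: "Z1 \<inter> Z2 = {}" unfolding Z1_def Z2_def using disjA by blast
  show ?thesis
  proof (cases "sv = None")
    case True
    then have srI: "sr = Some i0" using sr(2) svsr by simp
    obtain ib where ib: "ib \<in> I" "Some ib \<in> A v" "(ib, v) \<in> (Restr E Z2)\<^sup>*"
      using fromNone[of v] sv(1) True unfolding Z2_def by blast
    have "(Some i0, Some rho) \<in> F\<^sup>*" using sr(1) srI unfolding A_def by simp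
    then have "(i0, rho) \<in> (Restr E Z1)\<^sup>*" using toE unfolding Z1_def by blast
    moreover have "i0 \<in> Z1" using sr(1) srI unfolding Z1_def by simp
    moreover have "ib \<in> Z2" using ib unfolding Z2_def by simp
    ultimately show ?thesis using S0(1) ib Z1Y Z2Y Zd by blast
  next
    case False
    have svI: "sv = Some i0" using sv(2) False by blast
    then have srN: "sr = None" using sr(2) svsr by auto
    obtain ia where ia: "ia \<in> I" "Some ia \<in> A rho" "(ia, rho) \<in> (Restr E Z1)\<^sup>*"
      using fromNone[of rho] sr(1) srN unfolding Z1_def by blast
    have "(Some i0, Some v) \<in> F\<^sup>*" using sv(1) svI unfolding A_def by simp
    then have "(i0, v) \<in> (Restr E Z2)\<^sup>*" using toE unfolding Z2_def by blast
    moreover have "i0 \<in> Z2" using sv(1) svI unfolding Z2_def by simp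
    moreover have "ia \<in> Z1" using ia unfolding Z1_def by simp
    ultimately show ?thesis using S0(1) ia Z1Y Z2Y Zd by blast
  qed
qed

end


context net begin

lemma Y_sub_W: "Yn \<subseteq> W_nodes V E I out"
proof
  fix v assume vY: "v \<in> Yn"
  show "v \<in> W_nodes V E I out"
  proof (cases "v = rho")
    case True then show ?thesis unfolding W_nodes_def using rho_V by simp
  next
    case vr: False
    then have vH: "v \<in> Hs" using vY unfolding Yn_def by simp
    have vV: "v \<in> V" using vH Hs_V by blast
    show ?thesis
    proof (cases "v \<in> I")
      case True then show ?thesis unfolding W_nodes_def using vV by simp
    next
      case vI: False
      show ?thesis
      proof (cases "\<exists>i\<in>I. i_simple E out i v")
        case True
        then obtain i S where S: "i \<in> I" "simple_path E i out S" "v \<in> set S" unfolding i_simple_def by blast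
        have ds: "distinct S" using S unfolding simple_path_def by simp
        have vb1: "visits_before S v rho" using path_Yn[OF S(1,2,3)] vY vr by simp
        have iS: "S ! 0 = i" "0 < length S" using S(2) unfolding simple_path_def by (auto simp: hd_conv_nth)
        obtain p where p: "p < length S" "S ! p = v" using S(3) by (meson in_set_conv_nth)
        have "p \<noteq> 0"
        proof
          assume "p = 0" then have "v = i" using p iS by simp
          then show False using vI S(1) by simp
        qed
        then have vb2: "visits_before S i v" using vb_nth[OF ds iS(2) p(1)] iS p by simp
        show ?thesis unfolding W_nodes_def using vV S(1,2) vb1 vb2 by blast
      next
        case nsimp: False
        show ?thesis
        proof (cases "\<exists>i\<in>I. \<not> downstream E i v")
          case True
          then have "\<not> abs_appendage E I out v" unfolding abs_appendage_def i_appendage_def by blast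
          moreover have "\<not> abs_simple E I out v" unfolding abs_simple_def using nsimp I_ne by blast
          ultimately show ?thesis unfolding W_nodes_def using vV by blast
        next
          case False
          then have aapp: "abs_appendage E I out v"
            unfolding abs_appendage_def i_appendage_def using nsimp by blast
          obtain ia ib Z1 Z2 where Z: "ia \<in> I" "ib \<in> I" "Z1 \<subseteq> Yn" "Z2 \<subseteq> Yn" "Z1 \<inter> Z2 = {}"
            "ia \<in> Z1" "ib \<in> Z2" "(ia, rho) \<in> (Restr E Z1)\<^sup>*" "(ib, v) \<in> (Restr E Z2)\<^sup>*"
            using disjoint_paths[OF vH] nsimp by blast
          obtain P1 where P1: "simple_path E ia rho P1" "set P1 \<subseteq> Z1" using walk_to_path[OF Z(8) Z(6)] by blast
          obtain i0 S0 where S0: "i0 \<in> I" "simple_path E i0 out S0" using path_exists by blast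
          obtain ys zs where sp: "S0 = ys @ rho # zs" using rho_in_path[OF S0] by (meson split_list)
          have T: "simple_path E rho out (rho # zs)" using suffix_path[of E i0 out ys rho zs] S0(2) sp by simp
          have ds0: "distinct S0" using S0 unfolding simple_path_def by simp
          have zsY: "set zs \<inter> Yn = {}"
          proof (rule ccontr)
            assume "set zs \<inter> Yn \<noteq> {}"
            then obtain w where w: "w \<in> set zs" "w \<in> Yn" by blast
            obtain b1 b2 where "zs = b1 @ w # b2" using w(1) by (meson split_list)
            then have "visits_before S0 rho w" using vb_intro[of S0 ys rho b1 w b2] sp ds0 by simp
            then have "w \<notin> Hs" using after_rho[OF S0] by blast
            moreover have "w \<noteq> rho" using w(1) ds0 sp by auto
            ultimately show False using w(2) unfolding Yn_def by simp
          qed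
          have disj: "set P1 \<inter> set (rho # zs) \<subseteq> {rho}" using P1(2) Z(3) zsY by auto
          define S where "S = P1 @ tl (rho # zs)"
          have Sp: "simple_path E ia out S" unfolding S_def using path_concat[OF P1(1) T disj] .
          have setS: "set S \<subseteq> Z1 \<union> set zs" unfolding S_def using P1(2) by auto
          have rS: "rho \<in> set S" using rho_in_path[OF Z(1) Sp] .
          define C where "C = V - set S"
          have Z2C: "Z2 \<subseteq> C"
          proof -
            have "Z2 \<inter> set S = {}" using setS Z(4,5) zsY by blast
            then show ?thesis unfolding C_def using Z(4) Yn_V by blast
          qed
          have ibC: "ib \<in> C" using Z(7) Z2C by blast
          have vZ2: "v \<in> Z2"
          proof (cases "ib = v")
            case True then show ?thesis using Z(7) by simp
          next
            case False then show ?thesis using restr_end[OF Z(9)] by blast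
          qed
          have vC: "v \<in> C" using vZ2 Z2C by blast
          have ibv: "(ib, v) \<in> (Restr E C)\<^sup>*" using rtrancl_mono_set[OF Z(9) Z2C] .
          obtain u where u: "u \<in> C" "(u, v) \<in> (Restr E C)\<^sup>*" "(v, u) \<in> (Restr E C)\<^sup>*"
            and P: "\<exists>P. simple_path E ib out P \<and> u \<in> set P"
            using cond[OF Z(1) Sp C_def ibC ibv vC] by blast
          have CV: "C \<subseteq> V - {rho}" unfolding C_def using rS by blast
          have ibr: "ib \<noteq> rho" using ibC CV by blast
          have ibH: "ib \<in> Hs" using I_Hs[OF Z(2) ibr] .
          have ibu: "(ib, u) \<in> (Restr E C)\<^sup>*" using rtrancl_trans[OF ibv u(3)] .
          have "(ib, u) \<in> (Restr E (V - {rho}))\<^sup>*" using rtrancl_mono_set[OF ibu CV] .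
          then have uH: "u \<in> Hs" using Hs_step[OF ibH] by blast
          have nap: "\<not> abs_appendage E I out u"
            unfolding abs_appendage_def i_appendage_def i_simple_def using P Z(2) by blast
          have nbt: "\<not> between_ss V E I out u"
          proof
            assume "between_ss V E I out u"
            then obtain a b i' S' where ab: "adjacent_ss V E I out a b" "i' \<in> I" "simple_path E i' out S'"
              "visits_before S' a u" unfolding between_ss_def by blast
            have ssa: "ss a" using ab(1) unfolding adjacent_ss_def by simp
            have ds': "distinct S'" using ab(3) unfolding simple_path_def by simp
            have "visits_before S' rho u"
            proof (cases "a = rho")
              case True then show ?thesis using ab(4) by simp
            next
              case False
              have "visits_before S' rho a" using rho_first[OF ssa False ab(2,3)] .
              then show ?thesis using vb_trans[OF ds' _ ab(4)] by blast
            qed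
            then show False using after_rho[OF ab(2,3)] uH by blast
          qed
          have cse: "cs_path_equiv V E S v u" unfolding cs_path_equiv_def Let_def
            using vC u(1,2,3) unfolding C_def by blast
          show ?thesis unfolding W_nodes_def using vV aapp Z(1) Sp nap nbt cse by blast
        qed
      qed
    qed
  qed
qed

lemma W_eq: "W_nodes V E I out = Yn" using W_sub_Y Y_sub_W by blast

end

theorem theorem3p28:
  fixes V :: "'v set" and E :: "('v \<times> 'v) set" and I :: "'v set" and out :: 'v
  assumes "core_network V E I out"
    and "card I \<ge> 2"
  shows "(\<exists>bs. btf_decomp (hmat V E I out) V V bs) \<and>
         (\<forall>bs k. btf_decomp (hmat V E I out) V V bs \<longrightarrow> k < length bs \<longrightarrow> out \<in> snd (bs ! k) \<longrightarrow>
            perm_equiv (hmat V E I out) (fst (bs ! k)) (snd (bs ! k))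
                       (hmat (W_nodes V E I out) E I (rho1 V E I out)) (W_nodes V E I out) (W_nodes V E I out))"
proof -
  interpret net V E I out using assms by unfold_locales
  obtain i0 S0 where S0: "i0 \<in> I" "simple_path E i0 out S0" using path_exists by blast
  have ex: "\<exists>bs. btf_decomp (hmat V E I out) V V bs"
    using btf_exists[where M="hmat V E I out", OF finV mu_bij[OF S0] mu_diag[OF S0]] .
  have all: "\<forall>bs k. btf_decomp (hmat V E I out) V V bs \<longrightarrow> k < length bs \<longrightarrow> out \<in> snd (bs ! k) \<longrightarrow>
            perm_equiv (hmat V E I out) (fst (bs ! k)) (snd (bs ! k))
                       (hmat (W_nodes V E I out) E I (rho1 V E I out)) (W_nodes V E I out) (W_nodes V E I out)"
  proof (intro allI impI)
    fix bs k assume b: "btf_decomp (hmat V E I out) V V bs" "k < length bs" "out \<in> snd (bs ! k)"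
    have "fst (bs ! k) = Yn \<and> snd (bs ! k) = CY" using block_is_Y[OF b] .
    then show "perm_equiv (hmat V E I out) (fst (bs ! k)) (snd (bs ! k))
                       (hmat (W_nodes V E I out) E I (rho1 V E I out)) (W_nodes V E I out) (W_nodes V E I out)"
      using perm_final W_eq by simp
  qed
  show ?thesis using ex all by blast
qed


end
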